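(* Let $R$ be a commutative ring in which $2$ is invertible, $I$ an ideal of $R$, $m\ge1$, and let $(Q,q)$ be a quadratic space over $R$ of rank $2m-1$ having an ordered basis $\mathcal{B}$ with respect to which the matrix of $\langle\,,\,\rangle$ is $(2)\perp\widetilde{\psi}_{m-1}$. Identify automorphisms of $Q\perp\mathbb{H}(R)$ with matrices in $\mathrm{GL}_{2m+1}(R)$ via the ordered basis $\mathcal{B}$ followed by $x,f$ (with respect to which the form has matrix $(2)\perp\widetilde{\psi}_m$). Then $\mathrm{EO}_{(R,I)}(Q,\mathbb{H}(R))=\mathrm{EO}_{2m+1}(R,I)$.
   Context: For a quadratic form $q$ the bilinear form is $\langle x,y\rangle=q(x+y)-q(x)-q(y)$ (so $\langle x,x\rangle=2q(x)$); a quadratic space is a finitely generated projective module with non-degenerate such form ($z\mapsto\langle z,-\rangle$ an isomorphism onto the dual). $\mathbb{H}(R)=Rx\oplus Rf$ with $q(ax+bf)=ab$; orthogonal sums carry the sum of forms. $\widetilde{\psi}_s=\sum_{i=1}^s(e_{2i-1,2i}+e_{2i,2i-1})$ ($e_{i,j}$ matrix units; $\widetilde\psi_0$ is empty). DSER transformations on $Q\perp\mathbb{H}(P)$ ($\mathbb{H}(P)=P\oplus P^*$, $q(y,g)=g(y)$): for $\alpha:Q\to P$ let $\alpha^*:P^*\to Q$ satisfy $\langle\alpha^*(g),z\rangle=g(\alpha(z))$, $E_\alpha(z,y,g)=(z-\alpha^*(g),y+\alpha(z)-\tfrac12\alpha\alpha^*(g),g)$; for $\beta:Q\to P^*$ let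 $\beta^*:P\to Q$ satisfy $\langle\beta^*(y),z\rangle=\beta(z)(y)$, $E^*_\beta(z,y,g)=(z-\beta^*(y),y,g+\beta(z)-\tfrac12\beta\beta^*(y))$. $\mathrm{EO}_R(Q,\mathbb{H}(P))$ is generated by all $E_\alpha,E^*_\beta$; $\mathrm{EO}_I(Q,\mathbb{H}(P))$ by those with $\alpha(Q)\subseteq IP$, $\beta(Q)\subseteq IP^*$; $\mathrm{EO}_{(R,I)}(Q,\mathbb{H}(P))$ is its normal closure in $\mathrm{EO}_R(Q,\mathbb{H}(P))$. Odd elementary orthogonal group: for $N=2s+1$ and $1\le i\le s$, $F^1_i(\lambda)=I_N+\lambda(e_{1,2i+1}-2e_{2i,1}-\lambda e_{2i,2i+1})$, $F^2_i(\lambda)=I_N+\lambda(e_{1,2i}-2e_{2i+1,1}-\lambda e_{2i+1,2i})$. $\mathrm{EO}_{2s+1}(R)$ is generated by these with $\lambda\in R$, $\mathrm{EO}_{2s+1}(I)$ by those with $\lambda\in I$, and $\mathrm{EO}_{2s+1}(R,I)$ is the normal closure of $\mathrm{EO}_{2s+1}(I)$ in $\mathrm{EO}_{2s+1}(R)$. *)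

theory Defs
  imports Main
begin

text \<open>Vectors are functions
nat => 'a and square matrices of size N are functions nat => nat => 'a, both
1-indexed (indices 1..N) as in the paper; entries outside the range are 0.\<close>

definition is_ideal :: "'a::comm_ring_1 set \<Rightarrow> bool" where
  "is_ideal I \<longleftrightarrow> 0 \<in> I \<and> (\<forall>x\<in>I. \<forall>y\<in>I. x + y \<in> I) \<and> (\<forall>r x. x \<in> I \<longrightarrow> r * x \<in> I)"

text \<open>The element 1/2 of R (meaningful when 2 is invertible).\<close>
definition half :: "'a::comm_ring_1" where
  "half = (THE u. 2 * u = 1)"

definition idm :: "nat \<Rightarrow> nat \<Rightarrow> nat \<Rightarrow> 'a::comm_ring_1" where
  "idm N i j = (if i = j \<and> i \<in> {1..N} then 1 else 0)"

definition emat :: "nat \<Rightarrow> nat \<Rightarrow> nat \<Rightarrow> nat \<Rightarrow> nat \<Rightarrow> 'a::comm_ring_1" where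
  "emat N k l i j = (if i = k \<and> j = l \<and> i \<in> {1..N} \<and> j \<in> {1..N} then 1 else 0)"

definition mmul :: "nat \<Rightarrow> (nat \<Rightarrow> nat \<Rightarrow> 'a::comm_ring_1) \<Rightarrow> (nat \<Rightarrow> nat \<Rightarrow> 'a) \<Rightarrow> nat \<Rightarrow> nat \<Rightarrow> 'a" where
  "mmul N A B i j = (if i \<in> {1..N} \<and> j \<in> {1..N} then (\<Sum>k = 1..N. A i k * B k j) else 0)"

inductive_set gen_group :: "nat \<Rightarrow> (nat \<Rightarrow> nat \<Rightarrow> 'a::comm_ring_1) set \<Rightarrow> (nat \<Rightarrow> nat \<Rightarrow> 'a) set"
  for N S where
  gen_id: "idm N \<in> gen_group N S"
| gen_mul: "A \<in> gen_group N S \<Longrightarrow> g \<in> S \<Longrightarrow> mmul N A g \<in> gen_group N S"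
| gen_mul_inv: "A \<in> gen_group N S \<Longrightarrow> g \<in> S \<Longrightarrow> mmul N g h = idm N \<Longrightarrow> mmul N h g = idm N
     \<Longrightarrow> mmul N A h \<in> gen_group N S"

definition normal_closure :: "nat \<Rightarrow> (nat \<Rightarrow> nat \<Rightarrow> 'a::comm_ring_1) set \<Rightarrow> (nat \<Rightarrow> nat \<Rightarrow> 'a) set \<Rightarrow> (nat \<Rightarrow> nat \<Rightarrow> 'a) set" where
  "normal_closure N G H = gen_group N
     {mmul N (mmul N g h) g' | g h g'. g \<in> G \<and> h \<in> H \<and> mmul N g g' = idm N \<and> mmul N g' g = idm N}"

definition F1 :: "nat \<Rightarrow> nat \<Rightarrow> 'a::comm_ring_1 \<Rightarrow> nat \<Rightarrow> nat \<Rightarrow> 'a" where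
  "F1 s i c = (let N = 2*s+1 in
     (\<lambda>a b. idm N a b + c * (emat N 1 (2*i+1) a b - 2 * emat N (2*i) 1 a b - c * emat N (2*i) (2*i+1) a b)))"

definition F2 :: "nat \<Rightarrow> nat \<Rightarrow> 'a::comm_ring_1 \<Rightarrow> nat \<Rightarrow> nat \<Rightarrow> 'a" where
  "F2 s i c = (let N = 2*s+1 in
     (\<lambda>a b. idm N a b + c * (emat N 1 (2*i) a b - 2 * emat N (2*i+1) 1 a b - c * emat N (2*i+1) (2*i) a b)))"

definition EO_gens :: "nat \<Rightarrow> 'a::comm_ring_1 set \<Rightarrow> (nat \<Rightarrow> nat \<Rightarrow> 'a) set" where
  "EO_gens s J = {F1 s i c | i c. i \<in> {1..s} \<and> c \<in> J} \<union> {F2 s i c | i c. i \<in> {1..s} \<and> c \<in> J}"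

definition EO_odd :: "nat \<Rightarrow> (nat \<Rightarrow> nat \<Rightarrow> 'a::comm_ring_1) set" where
  "EO_odd s = gen_group (2*s+1) (EO_gens s UNIV)"

definition EO_odd_ideal :: "nat \<Rightarrow> 'a::comm_ring_1 set \<Rightarrow> (nat \<Rightarrow> nat \<Rightarrow> 'a) set" where
  "EO_odd_ideal s I = gen_group (2*s+1) (EO_gens s I)"

definition EO_odd_rel :: "nat \<Rightarrow> 'a::comm_ring_1 set \<Rightarrow> (nat \<Rightarrow> nat \<Rightarrow> 'a) set" where
  "EO_odd_rel s I = normal_closure (2*s+1) (EO_odd s) (EO_odd_ideal s I)"

definition psi_tilde :: "nat \<Rightarrow> nat \<Rightarrow> nat \<Rightarrow> 'a::comm_ring_1" where
  "psi_tilde s i j = (if \<exists>k\<in>{1..s}. (i = 2*k-1 \<and> j = 2*k) \<or> (i = 2*k \<and> j = 2*k-1) then 1 else 0)"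

definition gramQ :: "nat \<Rightarrow> nat \<Rightarrow> nat \<Rightarrow> 'a::comm_ring_1" where
  "gramQ m i j = (if i = 1 \<and> j = 1 then 2
                  else if i \<ge> 2 \<and> j \<ge> 2 then psi_tilde (m-1) (i-1) (j-1) else 0)"

text \<open>Elements of Q = coordinate vectors w.r.t. B, supported on 1..2m-1\<close>
definition isQ :: "nat \<Rightarrow> (nat \<Rightarrow> 'a::comm_ring_1) \<Rightarrow> bool" where
  "isQ m z \<longleftrightarrow> (\<forall>k. k \<notin> {1..2*m-1} \<longrightarrow> z k = 0)"

definition bilQ :: "nat \<Rightarrow> (nat \<Rightarrow> 'a::comm_ring_1) \<Rightarrow> (nat \<Rightarrow> 'a) \<Rightarrow> 'a" where
  "bilQ m z w = (\<Sum>i = 1..2*m-1. \<Sum>j = 1..2*m-1. z i * gramQ m i j * w j)"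

definition linQ :: "nat \<Rightarrow> (nat \<Rightarrow> 'a::comm_ring_1) \<Rightarrow> (nat \<Rightarrow> 'a) \<Rightarrow> 'a" where
  "linQ m a z = (\<Sum>k = 1..2*m-1. a k * z k)"

text \<open>With P = R and P^* identified with R via g |-> g(1), this gives alpha^*(g) = adjQ m alpha g
  and beta^*(y) = adjQ m beta y (as beta(z)(y) = beta(z)(1) * y).\<close>
definition adjQ :: "nat \<Rightarrow> ((nat \<Rightarrow> 'a::comm_ring_1) \<Rightarrow> 'a) \<Rightarrow> 'a \<Rightarrow> nat \<Rightarrow> 'a" where
  "adjQ m F c = (THE w. isQ m w \<and> (\<forall>z. isQ m z \<longrightarrow> bilQ m w z = c * F z))"

text \<open>Q-component of a vector of Q \<perp> H(R); coordinates: 1..2m-1 for B, 2m for x, 2m+1 for f\<close>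
definition zpart :: "nat \<Rightarrow> (nat \<Rightarrow> 'a::comm_ring_1) \<Rightarrow> nat \<Rightarrow> 'a" where
  "zpart m v = (\<lambda>k. if k \<in> {1..2*m-1} then v k else 0)"

definition E_alpha :: "nat \<Rightarrow> ((nat \<Rightarrow> 'a::comm_ring_1) \<Rightarrow> 'a) \<Rightarrow> (nat \<Rightarrow> 'a) \<Rightarrow> nat \<Rightarrow> 'a" where
  "E_alpha m al v = (let w = adjQ m al (v (2*m+1)) in
     (\<lambda>k. if k \<in> {1..2*m-1} then v k - w k
          else if k = 2*m then v (2*m) + al (zpart m v) - half * al w
          else if k = 2*m+1 then v (2*m+1) else 0))"

definition E_beta :: "nat \<Rightarrow> ((nat \<Rightarrow> 'a::comm_ring_1) \<Rightarrow> 'a) \<Rightarrow> (nat \<Rightarrow> 'a) \<Rightarrow> nat \<Rightarrow> 'a" where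
  "E_beta m be v = (let w = adjQ m be (v (2*m)) in
     (\<lambda>k. if k \<in> {1..2*m-1} then v k - w k
          else if k = 2*m then v (2*m)
          else if k = 2*m+1 then v (2*m+1) + be (zpart m v) - half * be w else 0))"

definition unitv :: "nat \<Rightarrow> nat \<Rightarrow> 'a::comm_ring_1" where
  "unitv j = (\<lambda>k. if k = j then 1 else 0)"

definition mat_of :: "nat \<Rightarrow> ((nat \<Rightarrow> 'a::comm_ring_1) \<Rightarrow> (nat \<Rightarrow> 'a)) \<Rightarrow> nat \<Rightarrow> nat \<Rightarrow> 'a" where
  "mat_of N T = (\<lambda>i j. if i \<in> {1..N} \<and> j \<in> {1..N} then T (unitv j) i else 0)"

definition DSER_gens :: "nat \<Rightarrow> 'a::comm_ring_1 set \<Rightarrow> (nat \<Rightarrow> nat \<Rightarrow> 'a) set" where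
  "DSER_gens m J =
     {mat_of (2*m+1) (E_alpha m (linQ m a)) | a. \<forall>z. isQ m z \<longrightarrow> linQ m a z \<in> J}
   \<union> {mat_of (2*m+1) (E_beta m (linQ m b)) | b. \<forall>z. isQ m z \<longrightarrow> linQ m b z \<in> J}"

definition EO_QH :: "nat \<Rightarrow> (nat \<Rightarrow> nat \<Rightarrow> 'a::comm_ring_1) set" where
  "EO_QH m = gen_group (2*m+1) (DSER_gens m UNIV)"

definition EO_QH_ideal :: "nat \<Rightarrow> 'a::comm_ring_1 set \<Rightarrow> (nat \<Rightarrow> nat \<Rightarrow> 'a) set" where
  "EO_QH_ideal m I = gen_group (2*m+1) (DSER_gens m I)"

definition EO_QH_rel :: "nat \<Rightarrow> 'a::comm_ring_1 set \<Rightarrow> (nat \<Rightarrow> nat \<Rightarrow> 'a) set" where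
  "EO_QH_rel m I = normal_closure (2*m+1) (EO_QH m) (EO_QH_ideal m I)"

end

theory Submission
  imports Defs
begin

definition cleanm :: "nat \<Rightarrow> (nat \<Rightarrow> nat \<Rightarrow> 'a::comm_ring_1) \<Rightarrow> bool" where
  "cleanm N A \<longleftrightarrow> (\<forall>i j. \<not> (i \<in> {1..N} \<and> j \<in> {1..N}) \<longrightarrow> A i j = 0)"

definition clm :: "nat \<Rightarrow> (nat \<Rightarrow> nat \<Rightarrow> 'a::comm_ring_1) \<Rightarrow> nat \<Rightarrow> nat \<Rightarrow> 'a" where
  "clm N A = (\<lambda>i j. if i \<in> {1..N} \<and> j \<in> {1..N} then A i j else 0)"

lemma mmul_assoc: "mmul N (mmul N A B) C = mmul N A (mmul N B C)"
proof (intro ext)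
  fix i j
  show "mmul N (mmul N A B) C i j = mmul N A (mmul N B C) i j"
  proof (cases "i \<in> {1..N} \<and> j \<in> {1..N}")
    case True
    have "mmul N (mmul N A B) C i j = (\<Sum>k = 1..N. (\<Sum>l = 1..N. A i l * B l k) * C k j)"
      using True by (simp add: mmul_def)
    also have "\<dots> = (\<Sum>k = 1..N. \<Sum>l = 1..N. A i l * B l k * C k j)"
      by (simp add: sum_distrib_right)
    also have "\<dots> = (\<Sum>l = 1..N. \<Sum>k = 1..N. A i l * B l k * C k j)"
      by (rule sum.swap)
    also have "\<dots> = (\<Sum>l = 1..N. A i l * (\<Sum>k = 1..N. B l k * C k j))"
      by (simp add: sum_distrib_left mult.assoc)
    also have "\<dots> = mmul N A (mmul N B C) i j"
      using True by (simp add: mmul_def)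
    finally show ?thesis .
  qed (auto simp: mmul_def)
qed

lemma mmul_clm: "mmul N A B = mmul N (clm N A) (clm N B)"
  unfolding mmul_def clm_def by (intro ext) (auto intro!: sum.cong)

lemma cleanm_mmul[simp]: "cleanm N (mmul N A B)"
  unfolding cleanm_def mmul_def by auto

lemma cleanm_idm[simp]: "cleanm N (idm N)"
  unfolding cleanm_def idm_def by auto

lemma clm_clean: "cleanm N A \<Longrightarrow> clm N A = A"
  unfolding cleanm_def clm_def by (intro ext) auto

lemma mmul_idm_right: "mmul N A (idm N) = clm N A"
proof (intro ext)
  fix i j
  show "mmul N A (idm N) i j = clm N A i j"
  proof (cases "i \<in> {1..N} \<and> j \<in> {1..N}")
    case True
    have "mmul N A (idm N) i j = (\<Sum>k = 1..N. A i k * idm N k j)" using True by (simp add: mmul_def)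
    also have "\<dots> = (\<Sum>k = 1..N. if k = j then A i k else 0)"
      by (rule sum.cong) (auto simp: idm_def)
    also have "\<dots> = A i j" using True by (simp add: sum.delta')
    finally show ?thesis using True by (simp add: clm_def)
  qed (auto simp: mmul_def clm_def)
qed

lemma mmul_idm_left: "mmul N (idm N) A = clm N A"
proof (intro ext)
  fix i j
  show "mmul N (idm N) A i j = clm N A i j"
  proof (cases "i \<in> {1..N} \<and> j \<in> {1..N}")
    case True
    have "mmul N (idm N) A i j = (\<Sum>k = 1..N. idm N i k * A k j)" using True by (simp add: mmul_def)
    also have "\<dots> = (\<Sum>k = 1..N. if k = i then A k j else 0)"
      by (rule sum.cong) (auto simp: idm_def)
    also have "\<dots> = A i j" using True by (simp add: sum.delta)
    finally show ?thesis using True by (simp add: clm_def)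
  qed (auto simp: mmul_def clm_def)
qed

lemma clm_clm[simp]: "clm N (clm N A) = clm N A"
  unfolding clm_def by (intro ext) auto

lemma mmul_idm_r_clean[simp]: "cleanm N A \<Longrightarrow> mmul N A (idm N) = A"
  by (simp add: mmul_idm_right clm_clean)
lemma mmul_idm_l_clean[simp]: "cleanm N A \<Longrightarrow> mmul N (idm N) A = A"
  by (simp add: mmul_idm_left clm_clean)

lemma mmul_idm_mid_l: "mmul N (mmul N X (idm N)) Y = mmul N X Y"
  by (metis clm_clm mmul_clm mmul_idm_right)
lemma mmul_idm_mid_r: "mmul N X (mmul N (idm N) Y) = mmul N X Y"
  by (metis clm_clm mmul_clm mmul_idm_left)

definition subgrp :: "nat \<Rightarrow> (nat \<Rightarrow> nat \<Rightarrow> 'a::comm_ring_1) set \<Rightarrow> bool" where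
  "subgrp N G \<longleftrightarrow> (\<forall>A\<in>G. cleanm N A) \<and> idm N \<in> G \<and> (\<forall>A\<in>G. \<forall>B\<in>G. mmul N A B \<in> G)
     \<and> (\<forall>A\<in>G. \<exists>B\<in>G. mmul N A B = idm N \<and> mmul N B A = idm N)"

lemma gen_group_clean: "A \<in> gen_group N S \<Longrightarrow> cleanm N A"
  by (induction rule: gen_group.induct) auto

lemma gen_group_mul: "B \<in> gen_group N S \<Longrightarrow> A \<in> gen_group N S \<Longrightarrow> mmul N A B \<in> gen_group N S"
proof (induction rule: gen_group.induct)
  case gen_id
  have "cleanm N A" using gen_id by (rule gen_group_clean)
  then show ?case using gen_id by simp
next
  case (gen_mul A g)
  then show ?case by (metis gen_group.gen_mul mmul_assoc)
next
  case (gen_mul_inv A g h)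
  then show ?case by (metis gen_group.gen_mul_inv mmul_assoc)
qed

lemma gen_group_gen: "g \<in> S \<Longrightarrow> mmul N (idm N) g \<in> gen_group N S"
  by (rule gen_mul[OF gen_id])

lemma gen_group_subgrp:
  assumes "\<And>g. g \<in> S \<Longrightarrow> cleanm N g \<and> (\<exists>g'\<in>S. mmul N g g' = idm N \<and> mmul N g' g = idm N)"
  shows "subgrp N (gen_group N S)"
proof -
  have inv: "\<exists>B\<in>gen_group N S. mmul N A B = idm N \<and> mmul N B A = idm N" if "A \<in> gen_group N S" for A
    using that
  proof (induction rule: gen_group.induct)
    case gen_id
    then show ?case by (intro bexI[of _ "idm N"]) (auto intro: gen_group.gen_id)
  next
    case (gen_mul A g)
    then obtain B where B: "B \<in> gen_group N S" "mmul N A B = idm N" "mmul N B A = idm N" by blast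
    from assms[OF gen_mul(2)] obtain g' where g': "g' \<in> S" "mmul N g g' = idm N" "mmul N g' g = idm N" "cleanm N g" by blast
    have gg: "mmul N (idm N) g' \<in> gen_group N S" by (rule gen_group_gen[OF g'(1)])
    have cg': "cleanm N g'" using assms g' by blast
    have A: "cleanm N A" using gen_mul gen_group_clean by blast
    have cB: "cleanm N B" using B gen_group_clean by blast
    show ?case
    proof (intro bexI[of _ "mmul N g' B"] conjI)
      show "mmul N g' B \<in> gen_group N S" using gen_group_mul[OF B(1) gg] cg' by simp
      show "mmul N (mmul N A g) (mmul N g' B) = idm N"
        by (metis A B(2) g'(2) mmul_assoc mmul_idm_r_clean)
      show "mmul N (mmul N g' B) (mmul N A g) = idm N"
        by (metis B(3) cg' g'(3) mmul_assoc mmul_idm_r_clean)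
    qed
  next
    case (gen_mul_inv A g h)
    then obtain B where B: "B \<in> gen_group N S" "mmul N A B = idm N" "mmul N B A = idm N" by blast
    have cg: "cleanm N g" using assms gen_mul_inv by blast
    have gg: "mmul N (idm N) g \<in> gen_group N S" using gen_mul_inv by (intro gen_group_gen)
    have A: "cleanm N A" using gen_mul_inv gen_group_clean by blast
    show ?case
    proof (intro bexI[of _ "mmul N g B"] conjI)
      show "mmul N g B \<in> gen_group N S" using gen_group_mul[OF B(1) gg] cg by simp
      show "mmul N (mmul N A h) (mmul N g B) = idm N"
        by (metis A B(2) gen_mul_inv.hyps(4) mmul_assoc mmul_idm_r_clean)
      show "mmul N (mmul N g B) (mmul N A h) = idm N"
        by (metis B(3) cg gen_mul_inv.hyps(3) mmul_assoc mmul_idm_r_clean)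
    qed
  qed
  show ?thesis unfolding subgrp_def
    using inv gen_group_clean gen_group_mul by (auto intro: gen_group.gen_id)
qed

lemma gen_group_least:
  assumes T: "subgrp N T" and S: "S \<subseteq> T"
  shows "gen_group N S \<subseteq> T"
proof
  fix A assume "A \<in> gen_group N S"
  then show "A \<in> T"
  proof (induction rule: gen_group.induct)
    case gen_id
    then show ?case using T by (simp add: subgrp_def)
  next
    case (gen_mul A g)
    then show ?case using T S by (auto simp: subgrp_def)
  next
    case (gen_mul_inv A g h)
    have gT: "g \<in> T" using gen_mul_inv S by auto
    then obtain B where B: "B \<in> T" "mmul N g B = idm N" "mmul N B g = idm N" using T by (auto simp: subgrp_def)
    have cB: "cleanm N B" using B T by (auto simp: subgrp_def)
    have "B = mmul N (idm N) h"
      by (metis B(3) cB gen_mul_inv.hyps(3) mmul_assoc mmul_idm_r_clean)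
    then have "mmul N A h = mmul N A B" by (simp add: mmul_idm_mid_r)
    then show ?case using gen_mul_inv B T by (auto simp: subgrp_def)
  qed
qed

definition conjset :: "nat \<Rightarrow> (nat \<Rightarrow> nat \<Rightarrow> 'a::comm_ring_1) set \<Rightarrow> (nat \<Rightarrow> nat \<Rightarrow> 'a) set \<Rightarrow> (nat \<Rightarrow> nat \<Rightarrow> 'a) set" where
  "conjset N G H = {mmul N (mmul N g h) g' | g h g'. g \<in> G \<and> h \<in> H \<and> mmul N g g' = idm N \<and> mmul N g' g = idm N}"

lemma normal_closure_conjset: "normal_closure N G H = gen_group N (conjset N G H)"
  unfolding normal_closure_def conjset_def by simp

lemma NC_subgrp:
  assumes G: "subgrp N G" and H: "subgrp N H"
  shows "subgrp N (normal_closure N G H)"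
  unfolding normal_closure_conjset
proof (rule gen_group_subgrp)
  fix c assume "c \<in> conjset N G H"
  then obtain g h g' where c: "c = mmul N (mmul N g h) g'" "g \<in> G" "h \<in> H" "mmul N g g' = idm N" "mmul N g' g = idm N"
    unfolding conjset_def by blast
  obtain h' where h': "h' \<in> H" "mmul N h h' = idm N" "mmul N h' h = idm N"
    using H c by (auto simp: subgrp_def)
  have ch: "cleanm N h" "cleanm N h'" "cleanm N g" using H G h' c by (auto simp: subgrp_def)
  have e1: "mmul N c (mmul N (mmul N g h') g') = idm N"
  proof -
    have "mmul N c (mmul N (mmul N g h') g') = mmul N (mmul N g (mmul N h (mmul N (mmul N g' g) h'))) g'"
      unfolding c(1) by (simp add: mmul_assoc)
    also have "\<dots> = idm N" using c h' ch by (simp add: mmul_idm_mid_r)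
    finally show ?thesis .
  qed
  have e2: "mmul N (mmul N (mmul N g h') g') c = idm N"
  proof -
    have "mmul N (mmul N (mmul N g h') g') c = mmul N (mmul N g (mmul N h' (mmul N (mmul N g' g) h))) g'"
      unfolding c(1) by (simp add: mmul_assoc)
    also have "\<dots> = idm N" using c h' ch by (simp add: mmul_idm_mid_r)
    finally show ?thesis .
  qed
  have "mmul N (mmul N g h') g' \<in> conjset N G H" unfolding conjset_def using c h' by blast
  then show "cleanm N c \<and> (\<exists>g'\<in>conjset N G H. mmul N c g' = idm N \<and> mmul N g' c = idm N)"
    using e1 e2 c by auto
qed

lemma conjset_conj:
  assumes G: "subgrp N G" and c: "c \<in> conjset N G H" and g: "g \<in> G" "mmul N g g' = idm N" "mmul N g' g = idm N"
  shows "mmul N (mmul N g c) g' \<in> conjset N G H"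
proof -
  obtain k h k' where k: "c = mmul N (mmul N k h) k'" "k \<in> G" "h \<in> H" "mmul N k k' = idm N" "mmul N k' k = idm N"
    using c unfolding conjset_def by blast
  have ck: "cleanm N k" "cleanm N g" using G k g by (auto simp: subgrp_def)
  have "mmul N (mmul N g c) g' = mmul N (mmul N (mmul N g k) h) (mmul N k' g')"
    unfolding k(1) by (simp add: mmul_assoc)
  moreover have "mmul N g k \<in> G" using G g k by (auto simp: subgrp_def)
  moreover have "mmul N (mmul N g k) (mmul N k' g') = idm N"
  proof -
    have "mmul N (mmul N g k) (mmul N k' g') = mmul N g (mmul N (mmul N k k') g')" by (simp add: mmul_assoc)
    then show ?thesis using k g ck by (simp add: mmul_idm_mid_r)
  qed
  moreover have "mmul N (mmul N k' g') (mmul N g k) = idm N"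
  proof -
    have "mmul N (mmul N k' g') (mmul N g k) = mmul N k' (mmul N (mmul N g' g) k)" by (simp add: mmul_assoc)
    then show ?thesis using k g ck by (simp add: mmul_idm_mid_r)
  qed
  ultimately show ?thesis unfolding conjset_def using k by blast
qed

lemma NC_conj:
  assumes G: "subgrp N G" and A: "A \<in> normal_closure N G H"
    and g: "g \<in> G" "mmul N g g' = idm N" "mmul N g' g = idm N"
  shows "mmul N (mmul N g A) g' \<in> normal_closure N G H"
  using A unfolding normal_closure_conjset
proof (induction rule: gen_group.induct)
  case gen_id
  have "cleanm N g" using G g by (auto simp: subgrp_def)
  then show ?case using g by (simp add: gen_group.gen_id)
next
  case (gen_mul A c)
  have cA: "cleanm N A" using gen_mul gen_group_clean by blast
  have "mmul N (mmul N g (mmul N A c)) g' = mmul N (mmul N (mmul N g A) g') (mmul N (mmul N g c) g')"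
  proof -
    have "mmul N (mmul N (mmul N g A) g') (mmul N (mmul N g c) g') = mmul N g (mmul N (mmul N A (mmul N g' g)) (mmul N c g'))"
      by (simp add: mmul_assoc)
    then show ?thesis using g cA by (simp add: mmul_assoc)
  qed
  then show ?case using gen_mul conjset_conj[OF G gen_mul(2) g] by (metis gen_group.gen_mul)
next
  case (gen_mul_inv A c h)
  have cA: "cleanm N A" using gen_mul_inv gen_group_clean by blast
  have cg: "cleanm N g" using G g by (auto simp: subgrp_def)
  have eq: "mmul N (mmul N g (mmul N A h)) g' = mmul N (mmul N (mmul N g A) g') (mmul N (mmul N g h) g')"
  proof -
    have "mmul N (mmul N (mmul N g A) g') (mmul N (mmul N g h) g') = mmul N g (mmul N (mmul N A (mmul N g' g)) (mmul N h g'))"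
      by (simp add: mmul_assoc)
    then show ?thesis using g cA by (simp add: mmul_assoc)
  qed
  have i1: "mmul N (mmul N (mmul N g c) g') (mmul N (mmul N g h) g') = idm N"
  proof -
    have "mmul N (mmul N (mmul N g c) g') (mmul N (mmul N g h) g') = mmul N g (mmul N (mmul N c (mmul N (mmul N g' g) h)) g')"
      by (simp add: mmul_assoc)
    then show ?thesis using g gen_mul_inv cg by (simp add: mmul_idm_mid_r)
  qed
  have i2: "mmul N (mmul N (mmul N g h) g') (mmul N (mmul N g c) g') = idm N"
  proof -
    have "mmul N (mmul N (mmul N g h) g') (mmul N (mmul N g c) g') = mmul N g (mmul N (mmul N h (mmul N (mmul N g' g) c)) g')"
      by (simp add: mmul_assoc)
    then show ?thesis using g gen_mul_inv cg by (simp add: mmul_idm_mid_r)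
  qed
  show ?case unfolding eq
    by (rule gen_group.gen_mul_inv[OF gen_mul_inv.IH conjset_conj[OF G gen_mul_inv(2) g] i1 i2])
qed

lemma H_sub_NC:
  assumes G: "subgrp N G" and h: "h \<in> H" "cleanm N h"
  shows "h \<in> normal_closure N G H"
proof -
  have iG: "idm N \<in> G" using G by (simp add: subgrp_def)
  have ii: "mmul N (idm N) (idm N) = idm N" by simp
  have "mmul N (mmul N (idm N) h) (idm N) \<in> conjset N G H"
    unfolding conjset_def using iG ii h(1) by blast
  then have "mmul N (idm N) (mmul N (mmul N (idm N) h) (idm N)) \<in> normal_closure N G H"
    unfolding normal_closure_conjset by (rule gen_group_gen)
  then show ?thesis using h by simp
qed

lemma NC_mono:
  assumes G: "subgrp N G" and H2: "subgrp N H2" and S1: "S1 \<subseteq> normal_closure N G H2"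
  shows "normal_closure N G (gen_group N S1) \<subseteq> normal_closure N G H2"
proof -
  have T: "subgrp N (normal_closure N G H2)" using NC_subgrp[OF G H2] .
  have H1: "gen_group N S1 \<subseteq> normal_closure N G H2" using gen_group_least[OF T S1] .
  have "conjset N G (gen_group N S1) \<subseteq> normal_closure N G H2"
  proof
    fix c assume "c \<in> conjset N G (gen_group N S1)"
    then obtain g h g' where c: "c = mmul N (mmul N g h) g'" "g \<in> G" "h \<in> gen_group N S1" "mmul N g g' = idm N" "mmul N g' g = idm N"
      unfolding conjset_def by blast
    then show "c \<in> normal_closure N G H2" using NC_conj[OF G _ c(2) c(4) c(5)] H1 by blast
  qed
  then show ?thesis unfolding normal_closure_conjset[of N G "gen_group N S1"]
    using gen_group_least[OF T] by blast
qed

definition cleanv :: "nat \<Rightarrow> (nat \<Rightarrow> 'a::comm_ring_1) \<Rightarrow> bool" where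
  "cleanv N v \<longleftrightarrow> (\<forall>k. k \<notin> {1..N} \<longrightarrow> v k = 0)"

definition linmap :: "nat \<Rightarrow> ((nat \<Rightarrow> 'a::comm_ring_1) \<Rightarrow> (nat \<Rightarrow> 'a)) \<Rightarrow> bool" where
  "linmap N T \<longleftrightarrow> (\<forall>v. cleanv N v \<longrightarrow> cleanv N (T v))
     \<and> (\<forall>v w. T (\<lambda>k. v k + w k) = (\<lambda>k. T v k + T w k))
     \<and> (\<forall>c v. T (\<lambda>k. c * v k) = (\<lambda>k. c * T v k))"

lemma cleanv_unitv: "j \<in> {1..N} \<Longrightarrow> cleanv N (unitv j)"
  unfolding cleanv_def unitv_def by auto

lemma linmap_add: "linmap N T \<Longrightarrow> T (\<lambda>k. v k + w k) = (\<lambda>k. T v k + T w k)"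
  unfolding linmap_def by blast
lemma linmap_smult: "linmap N T \<Longrightarrow> T (\<lambda>k. c * v k) = (\<lambda>k. c * T v k)"
  unfolding linmap_def by blast

lemma lin_expand_aux:
  assumes T: "linmap N T" and K: "finite K"
  shows "T (\<lambda>k. if k \<in> K then v k else 0) = (\<lambda>i. \<Sum>j\<in>K. v j * T (unitv j) i)"
  using K
proof (induction K rule: finite_induct)
  case empty
  have "T (\<lambda>k. 0 * v k) = (\<lambda>k. 0 * T v k)" using T unfolding linmap_def by blast
  then show ?case by simp
next
  case (insert j K)
  have e: "(\<lambda>k. if k \<in> insert j K then v k else 0) = (\<lambda>k. (if k \<in> K then v k else 0) + (\<lambda>k. v j * unitv j k) k)"
    using insert(2) by (auto simp: unitv_def)
  have a: "T (\<lambda>k. (if k \<in> K then v k else 0) + (\<lambda>k. v j * unitv j k) k) = (\<lambda>i. T (\<lambda>k. if k \<in> K then v k else 0) i + T (\<lambda>k. v j * unitv j k) i)"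
    using linmap_add[OF T, of "\<lambda>k. if k \<in> K then v k else 0" "\<lambda>k. v j * unitv j k"] by simp
  have b: "T (\<lambda>k. v j * unitv j k) = (\<lambda>i. v j * T (unitv j) i)"
    using T unfolding linmap_def by blast
  show ?case unfolding e a b insert(3) using insert(1,2) by (simp add: add.commute)
qed

lemma lin_expand:
  assumes T: "linmap N T" and v: "cleanv N v"
  shows "T v i = (\<Sum>j = 1..N. v j * T (unitv j) i)"
proof -
  have "v = (\<lambda>k. if k \<in> {1..N} then v k else 0)" using v unfolding cleanv_def by auto
  then have "T v = (\<lambda>i. \<Sum>j = 1..N. v j * T (unitv j) i)"
    using lin_expand_aux[OF T, of "{1..N}" v] by simp
  then show ?thesis by simp
qed

lemma linmap_comp: "linmap N T \<Longrightarrow> linmap N S \<Longrightarrow> linmap N (\<lambda>v. T (S v))"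
  unfolding linmap_def by simp

lemma mat_comp:
  assumes T: "linmap N T" and S: "linmap N S"
  shows "mat_of N (\<lambda>v. T (S v)) = mmul N (mat_of N T) (mat_of N S)"
proof (intro ext)
  fix i j
  show "mat_of N (\<lambda>v. T (S v)) i j = mmul N (mat_of N T) (mat_of N S) i j"
  proof (cases "i \<in> {1..N} \<and> j \<in> {1..N}")
    case True
    have cS: "cleanv N (S (unitv j))" using S True cleanv_unitv unfolding linmap_def by blast
    have "T (S (unitv j)) i = (\<Sum>k = 1..N. S (unitv j) k * T (unitv k) i)"
      by (rule lin_expand[OF T cS])
    also have "\<dots> = (\<Sum>k = 1..N. mat_of N T i k * mat_of N S k j)"
      using True by (intro sum.cong) (auto simp: mat_of_def)
    finally show ?thesis using True by (simp add: mat_of_def mmul_def)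
  qed (auto simp: mat_of_def mmul_def)
qed

lemma mat_of_id: "mat_of N (\<lambda>v. v) = idm N"
  unfolding mat_of_def idm_def unitv_def by (intro ext) auto

lemma mat_of_cong:
  assumes "\<And>v. cleanv N v \<Longrightarrow> T v = S v" shows "mat_of N T = mat_of N S"
  unfolding mat_of_def by (intro ext) (auto simp: assms cleanv_unitv)

lemma cleanm_mat_of[simp]: "cleanm N (mat_of N T)"
  unfolding cleanm_def mat_of_def by auto

lemma mat_inv:
  assumes "linmap N T" "linmap N S" "\<And>v. cleanv N v \<Longrightarrow> T (S v) = v"
  shows "mmul N (mat_of N T) (mat_of N S) = idm N"
proof -
  have "mat_of N (\<lambda>v. T (S v)) = mat_of N (\<lambda>v. v)" using assms(3) by (rule mat_of_cong)
  then show ?thesis using mat_comp[OF assms(1,2)] mat_of_id by metis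
qed

definition Sm :: "nat \<Rightarrow> nat \<Rightarrow> 'a::comm_ring_1 \<Rightarrow> (nat \<Rightarrow> 'a) \<Rightarrow> nat \<Rightarrow> 'a" where
  "Sm p q l v = (\<lambda>k. if k = 1 then v 1 + l * v q else if k = p then v p - 2 * l * v 1 - l * l * v q else v k)"

definition Lm :: "nat \<Rightarrow> nat \<Rightarrow> nat \<Rightarrow> nat \<Rightarrow> 'a::comm_ring_1 \<Rightarrow> (nat \<Rightarrow> 'a) \<Rightarrow> nat \<Rightarrow> 'a" where
  "Lm p q r s a v = (\<lambda>k. if k = q then v q - a * v s else if k = r then v r + a * v p else v k)"

lemma linmap_Sm: "p \<in> {1..N} \<Longrightarrow> q \<in> {1..N} \<Longrightarrow> 1 \<le> N \<Longrightarrow> linmap N (Sm p q l)"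
  unfolding linmap_def cleanv_def Sm_def by (auto simp: algebra_simps fun_eq_iff)

lemma linmap_Lm: "p \<in> {1..N} \<Longrightarrow> q \<in> {1..N} \<Longrightarrow> r \<in> {1..N} \<Longrightarrow> s \<in> {1..N} \<Longrightarrow> linmap N (Lm p q r s a)"
  unfolding linmap_def cleanv_def Lm_def by (auto simp: algebra_simps fun_eq_iff)

lemma Sm_inv: "p \<noteq> 1 \<Longrightarrow> q \<noteq> 1 \<Longrightarrow> p \<noteq> q \<Longrightarrow> Sm p q l (Sm p q (-l) v) = v"
  unfolding Sm_def by (auto simp: algebra_simps fun_eq_iff)

lemma Lm_inv: "distinct [p,q,r,s] \<Longrightarrow> Lm p q r s a (Lm p q r s (-a) v) = v"
  unfolding Lm_def by (auto simp: algebra_simps fun_eq_iff)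

lemma id1:
  assumes "distinct [1,p,q,r,s]"
  shows "Sm q p l (Sm r s u (Sm q p (-l) (Sm r s (-u) v))) = Lm p q r s (2*l*u) v"
  using assms unfolding Sm_def Lm_def by (auto simp: algebra_simps fun_eq_iff)

lemma id2:
  assumes "distinct [1,p,q,r,s]"
  shows "Lm p q r s a (Sm s r u (Lm p q r s (-a) (Sm s r (-u) v))) = Sm q p (-(a*u)) (Lm p q s r (a*u*u) v)"
  using assms unfolding Sm_def Lm_def by (auto simp: algebra_simps fun_eq_iff)

lemma half2:
  assumes "(2::'a::comm_ring_1) dvd 1" shows "2 * (half::'a) = 1"
proof -
  obtain u :: 'a where u: "1 = 2 * u" using assms by (auto elim: dvdE)
  have "half = u" unfolding half_def
  proof (rule the_equality)
    show "2 * u = 1" using u by simp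
    fix x :: 'a assume "2 * x = 1"
    then have "x = x * (2 * u)" using u by simp
    also have "\<dots> = (2 * x) * u" by (simp add: algebra_simps)
    finally show "x = u" using \<open>2 * x = 1\<close> by simp
  qed
  then show ?thesis using u by simp
qed

definition sg :: "nat \<Rightarrow> nat" where
  "sg k = (if k = 1 then 1 else if even k then k + 1 else k - 1)"

lemma sg_range': "2 \<le> k \<Longrightarrow> k \<le> 2*m-1 \<Longrightarrow> 2 \<le> sg k \<and> sg k \<le> 2*m-1"
  unfolding sg_def by presburger

lemma sg_range: "k \<in> {2..2*m-1} \<Longrightarrow> sg k \<in> {2..2*m-1}"
  using sg_range' by auto

lemma sg_sg: "k \<in> {2..2*m-1} \<Longrightarrow> sg (sg k) = k"
  unfolding sg_def by (auto elim!: evenE oddE)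

lemma sg_ne: "k \<in> {2..2*m-1} \<Longrightarrow> sg k \<noteq> k"
  unfolding sg_def by (auto elim!: evenE oddE)

lemma sum_sg: "(\<Sum>k = 2..2*m-1. f (sg k)) = (\<Sum>k = 2..2*m-1. f k)"
  apply (rule sum.reindex_bij_witness[where i = sg and j = sg])
  using sg_range sg_sg by blast+

lemma split1: "(m::nat) \<ge> 1 \<Longrightarrow> (\<Sum>i = 1..2*m-1. f i) = f 1 + (\<Sum>i = 2..2*m-1. f i)"
proof -
  assume "m \<ge> 1"
  then have "{1..2*m-1} = insert 1 {2..2*m-1}" by auto
  then show ?thesis by simp
qed

lemma psi_char:
  assumes i: "i \<in> {2..2*m-1}" and j: "j \<in> {2..2*m-1}"
  shows "psi_tilde (m-1) (i-1) (j-1) = (if j = sg i then 1 else 0)"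
proof -
  have "(\<exists>k\<in>{1..m-1}. (i-1 = 2*k-1 \<and> j-1 = 2*k) \<or> (i-1 = 2*k \<and> j-1 = 2*k-1)) \<longleftrightarrow> j = sg i"
  proof
    assume "\<exists>k\<in>{1..m-1}. (i-1 = 2*k-1 \<and> j-1 = 2*k) \<or> (i-1 = 2*k \<and> j-1 = 2*k-1)"
    then obtain k where kk: "k \<in> {1..m-1}" "(i-1 = 2*k-1 \<and> j-1 = 2*k) \<or> (i-1 = 2*k \<and> j-1 = 2*k-1)" by blast
    then consider "i = 2*k" "j = 2*k+1" | "i = 2*k+1" "j = 2*k" using i j by auto
    then show "j = sg i" unfolding sg_def using kk(1) by cases auto
  next
    assume js: "j = sg i"
    show "\<exists>k\<in>{1..m-1}. (i-1 = 2*k-1 \<and> j-1 = 2*k) \<or> (i-1 = 2*k \<and> j-1 = 2*k-1)"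
    proof (cases "even i")
      case True
      then obtain k where k: "i = 2*k" by (auto elim: evenE)
      show ?thesis using i js k True by (intro bexI[of _ k]) (auto simp: sg_def)
    next
      case False
      then obtain k where k: "i = 2*k+1" by (auto elim: oddE)
      show ?thesis using i js k False by (intro bexI[of _ k]) (auto simp: sg_def)
    qed
  qed
  then show ?thesis unfolding psi_tilde_def by simp
qed

lemma gram_char:
  assumes i: "i \<in> {1..2*m-1}" and j: "j \<in> {1..2*m-1}"
  shows "gramQ m i j = (if j = (if i = 1 then 1 else sg i) then (if i = 1 then 2 else 1) else 0)"
proof -
  have s2: "i \<ge> 2 \<Longrightarrow> sg i \<ge> 2" using sg_range[of i m] i by auto
  show ?thesis
  proof (cases "i = 1")
    case True then show ?thesis using j by (auto simp: gramQ_def)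
  next
    case False
    show ?thesis
    proof (cases "j = 1")
      case True then show ?thesis using False i s2 by (auto simp: gramQ_def)
    next
      case False2: False
      then show ?thesis using False i j psi_char[of i m j] by (auto simp: gramQ_def)
    qed
  qed
qed

lemma gram_row:
  assumes i: "i \<in> {1..2*m-1}"
  shows "(\<Sum>j = 1..2*m-1. gramQ m i j * z j) = (if i = 1 then 2 * z 1 else z (sg i))"
proof -
  let ?t = "if i = 1 then 1 else sg i"
  have t: "?t \<in> {1..2*m-1}" using i sg_range[of i m] by auto
  have "(\<Sum>j = 1..2*m-1. gramQ m i j * z j) = (\<Sum>j = 1..2*m-1. if j = ?t then (if i = 1 then 2 else 1) * z j else 0)"
    by (rule sum.cong) (auto simp: gram_char[OF i])
  also have "\<dots> = (if i = 1 then 2 else 1) * z ?t" using t by (simp add: sum.delta)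
  finally show ?thesis by auto
qed

lemma bilQ_eq:
  assumes m: "m \<ge> 1"
  shows "bilQ m w z = 2 * w 1 * z 1 + (\<Sum>i = 2..2*m-1. w i * z (sg i))"
proof -
  have "bilQ m w z = (\<Sum>i = 1..2*m-1. w i * (\<Sum>j = 1..2*m-1. gramQ m i j * z j))"
    unfolding bilQ_def by (simp add: sum_distrib_left mult.assoc)
  also have "\<dots> = (\<Sum>i = 1..2*m-1. w i * (if i = 1 then 2 * z 1 else z (sg i)))"
  proof (rule sum.cong[OF refl])
    fix x assume "x \<in> {1..2*m-1}"
    then show "w x * (\<Sum>j = 1..2*m-1. gramQ m x j * z j) = w x * (if x = 1 then 2 * z 1 else z (sg x))"
      unfolding gram_row[OF \<open>x \<in> {1..2*m-1}\<close>] by simp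
  qed
  also have "\<dots> = 2 * w 1 * z 1 + (\<Sum>i = 2..2*m-1. w i * z (sg i))"
    unfolding split1[OF m] by simp
  finally show ?thesis .
qed

lemma linQ_eq: assumes m: "m \<ge> 1" shows "linQ m a z = a 1 * z 1 + (\<Sum>i = 2..2*m-1. a i * z i)"
  unfolding linQ_def split1[OF m] by simp

definition uvec :: "nat \<Rightarrow> (nat \<Rightarrow> 'a::comm_ring_1) \<Rightarrow> nat \<Rightarrow> 'a" where
  "uvec m a = (\<lambda>k. if k = 1 then half * a 1 else if k \<in> {2..2*m-1} then a (sg k) else 0)"

lemma isQ_uvec: "m \<ge> 1 \<Longrightarrow> isQ m (uvec m a)"
  unfolding isQ_def uvec_def by auto

lemma bilQ_uvec:
  assumes two: "(2::'a::comm_ring_1) dvd 1" and m: "m \<ge> 1"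
  shows "bilQ m (uvec m a) z = linQ m (a::nat \<Rightarrow> 'a) z"
proof -
  have "(\<Sum>i = 2..2*m-1. uvec m a i * z (sg i)) = (\<Sum>i = 2..2*m-1. a (sg i) * z (sg i))"
    by (rule sum.cong) (auto simp: uvec_def)
  also have "\<dots> = (\<Sum>i = 2..2*m-1. a i * z i)" using sum_sg[of "\<lambda>i. a i * z i" m] by simp
  finally have s: "(\<Sum>i = 2..2*m-1. uvec m a i * z (sg i)) = (\<Sum>i = 2..2*m-1. a i * z i)" .
  have "2 * uvec m a 1 * z 1 = a 1 * z 1"
    using half2[OF two] by (simp add: uvec_def mult.assoc[symmetric])
  then show ?thesis unfolding bilQ_eq[OF m] linQ_eq[OF m] s by simp
qed

lemma bilQ_unit:
  assumes m: "m \<ge> 1" and j: "j \<in> {1..2*m-1}"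
  shows "bilQ m w (unitv j) = (if j = 1 then 2 * w 1 else w (sg j))"
proof -
  have "(\<Sum>i = 2..2*m-1. w i * unitv j (sg i)) = (\<Sum>i = 2..2*m-1. w (sg (sg i)) * unitv j (sg i))"
  proof (rule sum.cong[OF refl])
    fix x assume x: "x \<in> {2..2*m-1}"
    show "w x * unitv j (sg x) = w (sg (sg x)) * unitv j (sg x)" using sg_sg[OF x] by simp
  qed
  also have "\<dots> = (\<Sum>i = 2..2*m-1. w (sg i) * unitv j i)"
    using sum_sg[of "\<lambda>i. w (sg i) * unitv j i" m] by simp
  also have "\<dots> = (\<Sum>i = 2..2*m-1. if i = j then w (sg i) else 0)"
    by (rule sum.cong) (auto simp: unitv_def)
  also have "\<dots> = (if j \<in> {2..2*m-1} then w (sg j) else 0)"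
    by (simp add: sum.delta)
  finally have s: "(\<Sum>i = 2..2*m-1. w i * unitv j (sg i)) = (if j \<in> {2..2*m-1} then w (sg j) else 0)" .
  show ?thesis unfolding bilQ_eq[OF m] s using j by (auto simp: unitv_def)
qed

lemma linQ_unit:
  assumes j: "j \<in> {1..2*m-1}"
  shows "linQ m a (unitv j) = a j"
proof -
  have "linQ m a (unitv j) = (\<Sum>k = 1..2*m-1. if k = j then a k else 0)"
    unfolding linQ_def by (rule sum.cong) (auto simp: unitv_def)
  also have "\<dots> = a j" using j by (simp add: sum.delta)
  finally show ?thesis .
qed

lemma isQ_unit: "j \<in> {1..2*m-1} \<Longrightarrow> isQ m (unitv j)"
  unfolding isQ_def unitv_def by auto

lemma bilQ_smult: "bilQ m (\<lambda>k. c * w k) z = c * bilQ m w z"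
  unfolding bilQ_def by (simp add: sum_distrib_left mult.assoc)

lemma linQ_smult: "linQ m a (\<lambda>k. c * w k) = c * linQ m a w"
  unfolding linQ_def by (simp add: sum_distrib_left algebra_simps)

lemma adjQ_eq:
  assumes two: "(2::'a::comm_ring_1) dvd 1" and m: "m \<ge> 1"
  shows "adjQ m (linQ m a) c = (\<lambda>k. c * uvec m (a::nat \<Rightarrow> 'a) k)"
  unfolding adjQ_def
proof (rule the_equality)
  show "isQ m (\<lambda>k. c * uvec m a k) \<and> (\<forall>z. isQ m z \<longrightarrow> bilQ m (\<lambda>k. c * uvec m a k) z = c * linQ m a z)"
    using isQ_uvec[OF m, of a] by (auto simp: isQ_def bilQ_smult bilQ_uvec[OF two m])
next
  fix w assume w: "isQ m w \<and> (\<forall>z. isQ m z \<longrightarrow> bilQ m w z = c * linQ m a z)"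
  show "w = (\<lambda>k. c * uvec m a k)"
  proof (rule ext)
    fix k
    show "w k = c * uvec m a k"
    proof (cases "k \<in> {1..2*m-1}")
      case False
      then show ?thesis using w m by (auto simp: isQ_def uvec_def)
    next
      case True
      show ?thesis
      proof (cases "k = 1")
        case k1: True
        have r1: "(1::nat) \<in> {1..2*m-1}" using m by auto
        have wz: "\<forall>z. isQ m z \<longrightarrow> bilQ m w z = c * linQ m a z" using w by (rule conjunct2)
        have "bilQ m w (unitv 1) = c * linQ m a (unitv 1)" by (rule wz[rule_format, OF isQ_unit[OF r1]])
        then have "2 * w 1 = c * a 1" using bilQ_unit[OF m r1, of w] linQ_unit[OF r1, of a] by simp
        note eq = this
        have "w 1 = (2 * half) * w 1" using half2[OF two] by simp
        also have "\<dots> = half * (2 * w 1)" by (simp add: algebra_simps)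
        also have "\<dots> = half * (c * a 1)" using eq by simp
        finally have "w 1 = half * (c * a 1)" .
        then show ?thesis using k1 by (simp add: uvec_def algebra_simps)
      next
        case False
        then have k2: "k \<in> {2..2*m-1}" using True by auto
        have sk: "sg k \<in> {1..2*m-1}" "sg k \<noteq> 1" using sg_range[OF k2] by auto
        have "bilQ m w (unitv (sg k)) = c * linQ m a (unitv (sg k))" using w isQ_unit[OF sk(1)] by auto
        then have "w k = c * a (sg k)" using bilQ_unit[OF m sk(1), of w] linQ_unit[OF sk(1), of a] sk sg_sg[OF k2] by auto
        then show ?thesis using k2 False by (simp add: uvec_def)
      qed
    qed
  qed
qed

definition Ea :: "nat \<Rightarrow> (nat \<Rightarrow> 'a::comm_ring_1) \<Rightarrow> (nat \<Rightarrow> 'a) \<Rightarrow> nat \<Rightarrow> 'a" where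
  "Ea m a v = (\<lambda>k. if k \<in> {1..2*m-1} then v k - v (2*m+1) * uvec m a k
      else if k = 2*m then v (2*m) + linQ m a (zpart m v) - half * (v (2*m+1) * linQ m a (uvec m a))
      else if k = 2*m+1 then v (2*m+1) else 0)"

definition Eb :: "nat \<Rightarrow> (nat \<Rightarrow> 'a::comm_ring_1) \<Rightarrow> (nat \<Rightarrow> 'a) \<Rightarrow> nat \<Rightarrow> 'a" where
  "Eb m a v = (\<lambda>k. if k \<in> {1..2*m-1} then v k - v (2*m) * uvec m a k
      else if k = 2*m then v (2*m)
      else if k = 2*m+1 then v (2*m+1) + linQ m a (zpart m v) - half * (v (2*m) * linQ m a (uvec m a))
      else 0)"

lemma E_alpha_eq:
  assumes two: "(2::'a::comm_ring_1) dvd 1" and m: "m \<ge> 1"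
  shows "E_alpha m (linQ m a) = Ea m (a::nat \<Rightarrow> 'a)"
  unfolding E_alpha_def Ea_def Let_def adjQ_eq[OF two m] linQ_smult by (intro ext) simp

lemma E_beta_eq:
  assumes two: "(2::'a::comm_ring_1) dvd 1" and m: "m \<ge> 1"
  shows "E_beta m (linQ m a) = Eb m (a::nat \<Rightarrow> 'a)"
  unfolding E_beta_def Eb_def Let_def adjQ_eq[OF two m] linQ_smult by (intro ext) simp

lemma linQ_cong: "(\<And>k. k \<in> {1..2*m-1} \<Longrightarrow> x k = y k) \<Longrightarrow> linQ m a x = linQ m a y"
  unfolding linQ_def by (rule sum.cong) auto

lemma linQ_congL: "(\<And>k. k \<in> {1..2*m-1} \<Longrightarrow> a k = b k) \<Longrightarrow> linQ m a x = linQ m b x"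
  unfolding linQ_def by (rule sum.cong) auto

lemma linQ_zpart[simp]: "linQ m a (zpart m v) = linQ m a v"
  by (rule linQ_cong) (simp add: zpart_def)

lemma nQ1: "(2*(m::nat) \<in> {1..2*m-1}) = False" by auto
lemma nQ2: "(2*(m::nat)+1 \<in> {1..2*m-1}) = False" by auto
lemma nQ3: "(2*(m::nat)+1 = 2*m) = False" by auto

lemma Ea_at_Q: "k \<in> {1..2*m-1} \<Longrightarrow> Ea m a v k = v k - v (2*m+1) * uvec m a k"
  by (simp add: Ea_def)
lemma Ea_at_2m: "Ea m a v (2*m) = v (2*m) + linQ m a v - half * (v (2*m+1) * linQ m a (uvec m a))"
  unfolding Ea_def nQ1 by simp
lemma Ea_at_top: "Ea m a v (2*m+1) = v (2*m+1)"
  unfolding Ea_def nQ2 nQ3 by simp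
lemma Ea_at_out: "k \<notin> {1..2*m-1} \<Longrightarrow> k \<noteq> 2*m \<Longrightarrow> k \<noteq> 2*m+1 \<Longrightarrow> Ea m a v k = 0"
  by (auto simp: Ea_def)
lemma Eb_at_out: "k \<notin> {1..2*m-1} \<Longrightarrow> k \<noteq> 2*m \<Longrightarrow> k \<noteq> 2*m+1 \<Longrightarrow> Eb m a v k = 0"
  by (auto simp: Eb_def)
lemma Eb_at_Q: "k \<in> {1..2*m-1} \<Longrightarrow> Eb m a v k = v k - v (2*m) * uvec m a k"
  by (simp add: Eb_def)
lemma Eb_at_2m: "Eb m a v (2*m) = v (2*m)"
  unfolding Eb_def nQ1 by simp
lemma Eb_at_top: "Eb m a v (2*m+1) = v (2*m+1) + linQ m a v - half * (v (2*m) * linQ m a (uvec m a))"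
  unfolding Eb_def nQ2 nQ3 by simp

lemma linQ_addL: "linQ m (\<lambda>k. a k + b k) z = linQ m a z + linQ m b z"
  unfolding linQ_def by (simp add: sum.distrib algebra_simps)
lemma linQ_addR: "linQ m a (\<lambda>k. x k + y k) = linQ m a x + linQ m a y"
  unfolding linQ_def by (simp add: sum.distrib algebra_simps)
lemma linQ_diffR: "linQ m a (\<lambda>k. x k - y k) = linQ m a x - linQ m a y"
  unfolding linQ_def by (simp add: sum_subtractf algebra_simps)
lemma linQ_smultL: "linQ m (\<lambda>k. c * a k) z = c * linQ m a z"
  unfolding linQ_def by (simp add: sum_distrib_left algebra_simps)
lemma linQ_zeroL[simp]: "linQ m (\<lambda>k. 0) z = 0"
  unfolding linQ_def by simp

lemma uvec_add: "uvec m (\<lambda>k. a k + b k) = (\<lambda>k. uvec m a k + uvec m b k)"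
  unfolding uvec_def by (auto simp: algebra_simps)

lemma uvec_zero: "uvec m (\<lambda>k. 0) = (\<lambda>k. 0)"
  unfolding uvec_def by auto

lemma B_sym:
  assumes m: "m \<ge> 1"
  shows "linQ m a (uvec m b) = linQ m b (uvec m a)"
proof -
  have s: "(\<Sum>i = 2..2*m-1. a i * uvec m b i) = (\<Sum>i = 2..2*m-1. a i * b (sg i))"
    by (rule sum.cong) (auto simp: uvec_def)
  have s2: "(\<Sum>i = 2..2*m-1. b i * uvec m a i) = (\<Sum>i = 2..2*m-1. b i * a (sg i))"
    by (rule sum.cong) (auto simp: uvec_def)
  have "(\<Sum>i = 2..2*m-1. a i * b (sg i)) = (\<Sum>i = 2..2*m-1. a (sg i) * b (sg (sg i)))"
    using sum_sg[of "\<lambda>i. a i * b (sg i)" m] by simp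
  also have "\<dots> = (\<Sum>i = 2..2*m-1. b i * a (sg i))"
  proof (rule sum.cong[OF refl])
    fix x assume x: "x \<in> {2..2*m-1}"
    show "a (sg x) * b (sg (sg x)) = b x * a (sg x)" using sg_sg[OF x] by simp
  qed
  finally show ?thesis unfolding linQ_eq[OF m] s s2 by (simp add: uvec_def algebra_simps)
qed

lemma Ea_comp:
  assumes two: "(2::'a::comm_ring_1) dvd 1" and m: "m \<ge> 1"
  shows "Ea m a (Ea m b v) = Ea m (\<lambda>k. a k + b k) (v::nat \<Rightarrow> 'a)"
proof (rule ext)
  fix k
  let ?g = "v (2*m+1)"
  have h2: "2 * half = (1::'a)" by (rule half2[OF two])
  have g: "Ea m b v (2*m+1) = ?g" and y: "Ea m b v (2*m) = v (2*m) + linQ m b v - half * (?g * linQ m b (uvec m b))"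
    by (rule Ea_at_top, rule Ea_at_2m)
  have z: "linQ m a (zpart m (Ea m b v)) = linQ m a v - ?g * linQ m a (uvec m b)"
  proof -
    have "linQ m a (zpart m (Ea m b v)) = linQ m a (\<lambda>k. v k - ?g * uvec m b k)"
      by (rule linQ_cong) (simp add: zpart_def Ea_def)
    then show ?thesis by (simp add: linQ_diffR linQ_smult)
  qed
  have BB: "linQ m (\<lambda>k. a k + b k) (uvec m (\<lambda>k. a k + b k)) =
      linQ m a (uvec m a) + linQ m a (uvec m b) + linQ m a (uvec m b) + linQ m b (uvec m b)"
    unfolding uvec_add linQ_addL linQ_addR using B_sym[OF m, of b a] by (simp add: algebra_simps)
  have alg: "half * (?g * (X + Y + Y + Z)) = half * (?g * X) + ?g * Y + half * (?g * Z)" for X Y Z :: 'a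
  proof -
    have "half * (?g * (X + Y + Y + Z)) = half * (?g * X) + (2 * half) * (?g * Y) + half * (?g * Z)"
      by (simp add: algebra_simps)
    then show ?thesis using h2 by simp
  qed
  show "Ea m a (Ea m b v) k = Ea m (\<lambda>k. a k + b k) v k"
  proof (cases "k \<in> {1..2*m-1}")
    case True
    show ?thesis unfolding Ea_at_Q[OF True] g uvec_add by (simp add: algebra_simps)
  next
    case False
    show ?thesis
    proof (cases "k = 2*m")
      case True
      have "Ea m a (Ea m b v) k = Ea m b v (2*m) + linQ m a (zpart m (Ea m b v)) - half * (?g * linQ m a (uvec m a))"
        unfolding True Ea_at_2m g linQ_zpart ..
      also have "\<dots> = v (2*m) + linQ m (\<lambda>k. a k + b k) v - half * (?g * linQ m (\<lambda>k. a k + b k) (uvec m (\<lambda>k. a k + b k)))"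
        unfolding y z BB unfolding alg unfolding linQ_addL by (simp add: algebra_simps)
      also have "\<dots> = Ea m (\<lambda>k. a k + b k) v k" unfolding True Ea_at_2m ..
      finally show ?thesis .
    next
      case False2: False
      show ?thesis
      proof (cases "k = 2*m+1")
        case True
        show ?thesis unfolding True Ea_at_top ..
      next
        case False3: False
        have z1: "Ea m a (Ea m b v) k = 0" by (rule Ea_at_out[OF False False2 False3])
        have z2: "Ea m (\<lambda>k. a k + b k) v k = 0" by (rule Ea_at_out[OF False False2 False3])
        show ?thesis by (simp only: z1 z2)
      qed
    qed
  qed
qed

lemma Eb_comp:
  assumes two: "(2::'a::comm_ring_1) dvd 1" and m: "m \<ge> 1"
  shows "Eb m a (Eb m b v) = Eb m (\<lambda>k. a k + b k) (v::nat \<Rightarrow> 'a)"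
proof (rule ext)
  fix k
  let ?g = "v (2*m)"
  have h2: "2 * half = (1::'a)" by (rule half2[OF two])
  have g: "Eb m b v (2*m) = ?g" and y: "Eb m b v (2*m+1) = v (2*m+1) + linQ m b v - half * (?g * linQ m b (uvec m b))"
    by (rule Eb_at_2m, rule Eb_at_top)
  have z: "linQ m a (zpart m (Eb m b v)) = linQ m a v - ?g * linQ m a (uvec m b)"
  proof -
    have "linQ m a (zpart m (Eb m b v)) = linQ m a (\<lambda>k. v k - ?g * uvec m b k)"
      by (rule linQ_cong) (simp add: zpart_def Eb_def)
    then show ?thesis by (simp add: linQ_diffR linQ_smult)
  qed
  have BB: "linQ m (\<lambda>k. a k + b k) (uvec m (\<lambda>k. a k + b k)) =
      linQ m a (uvec m a) + linQ m a (uvec m b) + linQ m a (uvec m b) + linQ m b (uvec m b)"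
    unfolding uvec_add linQ_addL linQ_addR using B_sym[OF m, of b a] by (simp add: algebra_simps)
  have alg: "half * (?g * (X + Y + Y + Z)) = half * (?g * X) + ?g * Y + half * (?g * Z)" for X Y Z :: 'a
  proof -
    have "half * (?g * (X + Y + Y + Z)) = half * (?g * X) + (2 * half) * (?g * Y) + half * (?g * Z)"
      by (simp add: algebra_simps)
    then show ?thesis using h2 by simp
  qed
  show "Eb m a (Eb m b v) k = Eb m (\<lambda>k. a k + b k) v k"
  proof (cases "k \<in> {1..2*m-1}")
    case True
    show ?thesis unfolding Eb_at_Q[OF True] g uvec_add by (simp add: algebra_simps)
  next
    case False
    show ?thesis
    proof (cases "k = 2*m+1")
      case True
      have "Eb m a (Eb m b v) k = Eb m b v (2*m+1) + linQ m a (zpart m (Eb m b v)) - half * (?g * linQ m a (uvec m a))"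
        unfolding True Eb_at_top g linQ_zpart ..
      also have "\<dots> = v (2*m+1) + linQ m (\<lambda>k. a k + b k) v - half * (?g * linQ m (\<lambda>k. a k + b k) (uvec m (\<lambda>k. a k + b k)))"
        unfolding y z BB unfolding alg unfolding linQ_addL by (simp add: algebra_simps)
      also have "\<dots> = Eb m (\<lambda>k. a k + b k) v k" unfolding True Eb_at_top ..
      finally show ?thesis .
    next
      case False2: False
      show ?thesis
      proof (cases "k = 2*m")
        case True
        show ?thesis unfolding True Eb_at_2m ..
      next
        case False3: False
        have z1: "Eb m a (Eb m b v) k = 0" by (rule Eb_at_out[OF False False3 False2])
        have z2: "Eb m (\<lambda>k. a k + b k) v k = 0" by (rule Eb_at_out[OF False False3 False2])
        show ?thesis by (simp only: z1 z2)
      qed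
    qed
  qed
qed

lemma Ea_zero: "m \<ge> 1 \<Longrightarrow> cleanv (2*m+1) v \<Longrightarrow> Ea m (\<lambda>k. 0) v = v"
  unfolding Ea_def uvec_zero cleanv_def by (intro ext) auto

lemma Eb_zero: "m \<ge> 1 \<Longrightarrow> cleanv (2*m+1) v \<Longrightarrow> Eb m (\<lambda>k. 0) v = v"
  unfolding Eb_def uvec_zero cleanv_def by (intro ext) auto

lemma linmap_Ea: assumes m: "m \<ge> 1" shows "linmap (2*m+1) (Ea m a)"
  unfolding linmap_def
proof (intro conjI allI impI)
  fix v :: "nat \<Rightarrow> 'a" assume "cleanv (2*m+1) v"
  show "cleanv (2*m+1) (Ea m a v)" unfolding cleanv_def Ea_def using m by auto
next
  fix v w :: "nat \<Rightarrow> 'a"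
  show "Ea m a (\<lambda>k. v k + w k) = (\<lambda>k. Ea m a v k + Ea m a w k)"
    unfolding Ea_def linQ_zpart linQ_addR by (intro ext) (simp add: algebra_simps)
next
  fix c :: 'a and v :: "nat \<Rightarrow> 'a"
  show "Ea m a (\<lambda>k. c * v k) = (\<lambda>k. c * Ea m a v k)"
    unfolding Ea_def linQ_zpart linQ_smult by (intro ext) (simp add: algebra_simps)
qed

lemma linmap_Eb: assumes m: "m \<ge> 1" shows "linmap (2*m+1) (Eb m a)"
  unfolding linmap_def
proof (intro conjI allI impI)
  fix v :: "nat \<Rightarrow> 'a" assume "cleanv (2*m+1) v"
  show "cleanv (2*m+1) (Eb m a v)" unfolding cleanv_def Eb_def using m by auto
next
  fix v w :: "nat \<Rightarrow> 'a"
  show "Eb m a (\<lambda>k. v k + w k) = (\<lambda>k. Eb m a v k + Eb m a w k)"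
    unfolding Eb_def linQ_zpart linQ_addR by (intro ext) (simp add: algebra_simps)
next
  fix c :: 'a and v :: "nat \<Rightarrow> 'a"
  show "Eb m a (\<lambda>k. c * v k) = (\<lambda>k. c * Eb m a v k)"
    unfolding Eb_def linQ_zpart linQ_smult by (intro ext) (simp add: algebra_simps)
qed

lemma Ea_restrict: assumes m: "m \<ge> 1" shows "Ea m (\<lambda>k. if k \<in> {1..2*m-1} then a k else 0) = Ea m a"
proof -
  have u: "uvec m (\<lambda>k. if k \<in> {1..2*m-1} then a k else 0) = uvec m a"
  proof (rule ext)
    fix k
    show "uvec m (\<lambda>k. if k \<in> {1..2*m-1} then a k else 0) k = uvec m a k"
    proof (cases "k \<in> {2..2*m-1}")
      case True
      then have "sg k \<in> {1..2*m-1}" using sg_range[OF True] by auto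
      then show ?thesis using True by (simp add: uvec_def)
    qed (use m in \<open>auto simp: uvec_def\<close>)
  qed
  have l: "linQ m (\<lambda>k. if k \<in> {1..2*m-1} then a k else 0) x = linQ m a x" for x
    by (rule linQ_congL) simp
  show ?thesis unfolding Ea_def u l ..
qed

lemma Eb_restrict: assumes m: "m \<ge> 1" shows "Eb m (\<lambda>k. if k \<in> {1..2*m-1} then a k else 0) = Eb m a"
proof -
  have u: "uvec m (\<lambda>k. if k \<in> {1..2*m-1} then a k else 0) = uvec m a"
  proof (rule ext)
    fix k
    show "uvec m (\<lambda>k. if k \<in> {1..2*m-1} then a k else 0) k = uvec m a k"
    proof (cases "k \<in> {2..2*m-1}")
      case True
      then have "sg k \<in> {1..2*m-1}" using sg_range[OF True] by auto
      then show ?thesis using True by (simp add: uvec_def)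
    qed (use m in \<open>auto simp: uvec_def\<close>)
  qed
  have l: "linQ m (\<lambda>k. if k \<in> {1..2*m-1} then a k else 0) x = linQ m a x" for x
    by (rule linQ_congL) simp
  show ?thesis unfolding Eb_def u l ..
qed

lemma linQ_delta: "j \<in> {1..2*m-1} \<Longrightarrow> linQ m (\<lambda>k. if k = j then c else 0) x = c * x j"
proof -
  assume j: "j \<in> {1..2*m-1}"
  have "linQ m (\<lambda>k. if k = j then c else 0) x = (\<Sum>k = 1..2*m-1. if k = j then c * x k else 0)"
    unfolding linQ_def by (rule sum.cong) auto
  also have "\<dots> = c * x j" using j by (simp add: sum.delta)
  finally show ?thesis .
qed

lemma uvec_e1: "uvec m (\<lambda>k. if k = 1 then c else 0) = (\<lambda>k. if k = 1 then half * c else 0)"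
  unfolding uvec_def using sg_range' by (intro ext) fastforce

lemma uvec_ep: "p \<in> {2..2*m-1} \<Longrightarrow> uvec m (\<lambda>k. if k = p then c else 0) = (\<lambda>k. if k = sg p then c else 0)"
  unfolding uvec_def using sg_range sg_sg by (intro ext) fastforce

lemma Ea_e1:
  assumes two: "(2::'a::comm_ring_1) dvd 1" and m: "m \<ge> 1" and v: "cleanv (2*m+1) v"
  shows "Ea m (\<lambda>k. if k = 1 then c else 0) v = Sm (2*m) (2*m+1) (-(half*c)) (v::nat \<Rightarrow> 'a)"
proof (rule ext)
  fix k
  have h2: "2 * half = (1::'a)" by (rule half2[OF two])
  have r1: "(1::nat) \<in> {1..2*m-1}" using m by auto
  have B: "linQ m (\<lambda>k. if k = 1 then c else 0) (uvec m (\<lambda>k. if k = 1 then c else 0)) = c * (half * c)"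
    unfolding linQ_delta[OF r1] uvec_e1 by simp
  have L: "linQ m (\<lambda>k. if k = 1 then c else 0) v = c * v 1"
    unfolding linQ_delta[OF r1] ..
  have alg: "v (2*m) + c * v 1 - half * (v (2*m+1) * (c * (half * c))) =
      v (2*m) - 2 * (-(half*c)) * v 1 - (-(half*c)) * (-(half*c)) * v (2*m+1)"
  proof -
    have "v (2*m) - 2 * (-(half*c)) * v 1 - (-(half*c)) * (-(half*c)) * v (2*m+1) =
      v (2*m) + (2 * half) * c * v 1 - half * (v (2*m+1) * (c * (half * c)))"
      by (simp add: algebra_simps)
    then show ?thesis using h2 by simp
  qed
  show "Ea m (\<lambda>k. if k = 1 then c else 0) v k = Sm (2*m) (2*m+1) (-(half*c)) v k"
  proof (cases "k = 2*m")
    case True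
    have "Ea m (\<lambda>k. if k = 1 then c else 0) v k = v (2*m) + c * v 1 - half * (v (2*m+1) * (c * (half * c)))"
      unfolding True Ea_at_2m L B ..
    also have "\<dots> = Sm (2*m) (2*m+1) (-(half*c)) v k"
      unfolding alg Sm_def using True m by simp
    finally show ?thesis .
  next
    case False
    then show ?thesis using m v unfolding Ea_def Sm_def cleanv_def uvec_e1
      by (auto simp: algebra_simps)
  qed
qed

lemma Ea_ep:
  assumes m: "m \<ge> 1" and p: "p \<in> {2..2*m-1}" and v: "cleanv (2*m+1) v"
  shows "Ea m (\<lambda>k. if k = p then c else 0) v = Lm p (sg p) (2*m) (2*m+1) c (v::nat \<Rightarrow> 'a::comm_ring_1)"
proof (rule ext)
  fix k
  have p1: "p \<in> {1..2*m-1}" using p by auto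
  have sp: "sg p \<in> {2..2*m-1}" "sg p \<noteq> p" using sg_range[OF p] sg_ne[OF p] by auto
  have B: "linQ m (\<lambda>k. if k = p then c else 0) (uvec m (\<lambda>k. if k = p then c else 0)) = 0"
    unfolding linQ_delta[OF p1] uvec_ep[OF p] using sp by simp
  have L: "linQ m (\<lambda>k. if k = p then c else 0) v = c * v p"
    unfolding linQ_delta[OF p1] ..
  show "Ea m (\<lambda>k. if k = p then c else 0) v k = Lm p (sg p) (2*m) (2*m+1) c v k"
  proof (cases "k = 2*m")
    case True
    have "Ea m (\<lambda>k. if k = p then c else 0) v k = v (2*m) + c * v p"
      unfolding True Ea_at_2m L B by simp
    also have "\<dots> = Lm p (sg p) (2*m) (2*m+1) c v k"
      unfolding Lm_def using True m sp p by auto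
    finally show ?thesis .
  next
    case False
    then show ?thesis using m v p sp unfolding Ea_def Lm_def cleanv_def uvec_ep[OF p]
      by (auto simp: algebra_simps)
  qed
qed

lemma Eb_e1:
  assumes two: "(2::'a::comm_ring_1) dvd 1" and m: "m \<ge> 1" and v: "cleanv (2*m+1) v"
  shows "Eb m (\<lambda>k. if k = 1 then c else 0) v = Sm (2*m+1) (2*m) (-(half*c)) (v::nat \<Rightarrow> 'a)"
proof (rule ext)
  fix k
  have h2: "2 * half = (1::'a)" by (rule half2[OF two])
  have r1: "(1::nat) \<in> {1..2*m-1}" using m by auto
  have B: "linQ m (\<lambda>k. if k = 1 then c else 0) (uvec m (\<lambda>k. if k = 1 then c else 0)) = c * (half * c)"
    unfolding linQ_delta[OF r1] uvec_e1 by simp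
  have L: "linQ m (\<lambda>k. if k = 1 then c else 0) v = c * v 1"
    unfolding linQ_delta[OF r1] ..
  have alg: "v (2*m+1) + c * v 1 - half * (v (2*m) * (c * (half * c))) =
      v (2*m+1) - 2 * (-(half*c)) * v 1 - (-(half*c)) * (-(half*c)) * v (2*m)"
  proof -
    have "v (2*m+1) - 2 * (-(half*c)) * v 1 - (-(half*c)) * (-(half*c)) * v (2*m) =
      v (2*m+1) + (2 * half) * c * v 1 - half * (v (2*m) * (c * (half * c)))"
      by (simp add: algebra_simps)
    then show ?thesis using h2 by simp
  qed
  show "Eb m (\<lambda>k. if k = 1 then c else 0) v k = Sm (2*m+1) (2*m) (-(half*c)) v k"
  proof (cases "k = 2*m+1")
    case True
    have "Eb m (\<lambda>k. if k = 1 then c else 0) v k = v (2*m+1) + c * v 1 - half * (v (2*m) * (c * (half * c)))"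
      unfolding True Eb_at_top L B ..
    also have "\<dots> = Sm (2*m+1) (2*m) (-(half*c)) v k"
      unfolding alg Sm_def using True m by simp
    finally show ?thesis .
  next
    case False
    then show ?thesis using m v unfolding Eb_def Sm_def cleanv_def uvec_e1
      by (auto simp: algebra_simps)
  qed
qed

lemma Eb_ep:
  assumes m: "m \<ge> 1" and p: "p \<in> {2..2*m-1}" and v: "cleanv (2*m+1) v"
  shows "Eb m (\<lambda>k. if k = p then c else 0) v = Lm p (sg p) (2*m+1) (2*m) c (v::nat \<Rightarrow> 'a::comm_ring_1)"
proof (rule ext)
  fix k
  have p1: "p \<in> {1..2*m-1}" using p by auto
  have sp: "sg p \<in> {2..2*m-1}" "sg p \<noteq> p" using sg_range[OF p] sg_ne[OF p] by auto
  have B: "linQ m (\<lambda>k. if k = p then c else 0) (uvec m (\<lambda>k. if k = p then c else 0)) = 0"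
    unfolding linQ_delta[OF p1] uvec_ep[OF p] using sp by simp
  have L: "linQ m (\<lambda>k. if k = p then c else 0) v = c * v p"
    unfolding linQ_delta[OF p1] ..
  show "Eb m (\<lambda>k. if k = p then c else 0) v k = Lm p (sg p) (2*m+1) (2*m) c v k"
  proof (cases "k = 2*m+1")
    case True
    have "Eb m (\<lambda>k. if k = p then c else 0) v k = v (2*m+1) + c * v p"
      unfolding True Eb_at_top L B by simp
    also have "\<dots> = Lm p (sg p) (2*m+1) (2*m) c v k"
      unfolding Lm_def using True m sp p by auto
    finally show ?thesis .
  next
    case False
    then show ?thesis using m v p sp unfolding Eb_def Lm_def cleanv_def uvec_ep[OF p]
      by (auto simp: algebra_simps)
  qed
qed

lemma F1_entry:
  assumes i: "i \<in> {1..m}" and a: "a \<in> {1..2*m+1}" and b: "b \<in> {1..2*m+1}"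
  shows "F1 m i c a b = Sm (2*i) (2*i+1) c (unitv b) a"
proof -
  have r: "2*i \<in> {1..2*m+1}" "2*i+1 \<in> {1..2*m+1}" "(1::nat) \<in> {1..2*m+1}" "2*i \<noteq> 1" "2*i+1 \<noteq> 1" "2*i+1 \<noteq> 2*i" using i by auto
  have e: "emat (2*m+1) k l a b = (if a = k \<and> b = l then 1 else 0)" if "k \<in> {1..2*m+1}" "l \<in> {1..2*m+1}" for k l
    using a b that by (simp add: emat_def)
  have d: "idm (2*m+1) a b = (if a = b then 1 else 0)" using a by (simp add: idm_def)
  show ?thesis unfolding F1_def Let_def e[OF r(3) r(2)] e[OF r(1) r(3)] e[OF r(1) r(2)] d Sm_def unitv_def
    using r by (auto simp: algebra_simps)
qed

lemma F1_eq:
  assumes i: "i \<in> {1..m}"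
  shows "F1 m i c = mat_of (2*m+1) (Sm (2*i) (2*i+1) c)"
proof (intro ext)
  fix a b
  show "F1 m i c a b = mat_of (2*m+1) (Sm (2*i) (2*i+1) c) a b"
  proof (cases "a \<in> {1..2*m+1} \<and> b \<in> {1..2*m+1}")
    case False
    have z: "emat (2*m+1) k l a b = 0" for k l using False by (auto simp: emat_def)
    have zi: "idm (2*m+1) a b = 0" using False by (auto simp: idm_def)
    show ?thesis unfolding F1_def Let_def z zi mat_of_def using False by auto
  next
    case True
    then show ?thesis using F1_entry[OF i, of a b c] by (simp add: mat_of_def)
  qed
qed

lemma F2_entry:
  assumes i: "i \<in> {1..m}" and a: "a \<in> {1..2*m+1}" and b: "b \<in> {1..2*m+1}"
  shows "F2 m i c a b = Sm (2*i+1) (2*i) c (unitv b) a"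
proof -
  have r: "2*i \<in> {1..2*m+1}" "2*i+1 \<in> {1..2*m+1}" "(1::nat) \<in> {1..2*m+1}" "2*i \<noteq> 1" "2*i+1 \<noteq> 1" "2*i+1 \<noteq> 2*i" using i by auto
  have e: "emat (2*m+1) k l a b = (if a = k \<and> b = l then 1 else 0)" if "k \<in> {1..2*m+1}" "l \<in> {1..2*m+1}" for k l
    using a b that by (simp add: emat_def)
  have d: "idm (2*m+1) a b = (if a = b then 1 else 0)" using a by (simp add: idm_def)
  show ?thesis unfolding F2_def Let_def e[OF r(3) r(1)] e[OF r(2) r(3)] e[OF r(2) r(1)] d Sm_def unitv_def
    using r by (auto simp: algebra_simps)
qed

lemma F2_eq:
  assumes i: "i \<in> {1..m}"
  shows "F2 m i c = mat_of (2*m+1) (Sm (2*i+1) (2*i) c)"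
proof (intro ext)
  fix a b
  show "F2 m i c a b = mat_of (2*m+1) (Sm (2*i+1) (2*i) c) a b"
  proof (cases "a \<in> {1..2*m+1} \<and> b \<in> {1..2*m+1}")
    case False
    have z: "emat (2*m+1) k l a b = 0" for k l using False by (auto simp: emat_def)
    have zi: "idm (2*m+1) a b = 0" using False by (auto simp: idm_def)
    show ?thesis unfolding F2_def Let_def z zi mat_of_def using False by auto
  next
    case True
    then show ?thesis using F2_entry[OF i, of a b c] by (simp add: mat_of_def)
  qed
qed

lemma EO_gens_char:
  "g \<in> EO_gens m J \<longleftrightarrow> (\<exists>p\<in>{2..2*m+1}. \<exists>c\<in>J. g = mat_of (2*m+1) (Sm (sg p) p c))"
proof
  assume "g \<in> EO_gens m J"
  then obtain i c where ic: "i \<in> {1..m}" "c \<in> J" "g = F1 m i c \<or> g = F2 m i c"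
    unfolding EO_gens_def by blast
  show "\<exists>p\<in>{2..2*m+1}. \<exists>c\<in>J. g = mat_of (2*m+1) (Sm (sg p) p c)"
  proof (cases "g = F1 m i c")
    case True
    have "sg (2*i+1) = 2*i" using ic by (simp add: sg_def)
    then show ?thesis using True ic by (intro bexI[of _ "2*i+1"] bexI[of _ c]) (auto simp: F1_eq[OF ic(1)])
  next
    case False
    then have g: "g = F2 m i c" using ic by blast
    have "sg (2*i) = 2*i+1" using ic by (simp add: sg_def)
    then show ?thesis using g ic by (intro bexI[of _ "2*i"] bexI[of _ c]) (auto simp: F2_eq[OF ic(1)])
  qed
next
  assume "\<exists>p\<in>{2..2*m+1}. \<exists>c\<in>J. g = mat_of (2*m+1) (Sm (sg p) p c)"
  then obtain p c where pc: "p \<in> {2..2*m+1}" "c \<in> J" "g = mat_of (2*m+1) (Sm (sg p) p c)" by blast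
  show "g \<in> EO_gens m J"
  proof (cases "even p")
    case True
    then obtain i where i: "p = 2*i" by (auto elim: evenE)
    have "sg p = 2*i+1" using i pc by (simp add: sg_def)
    moreover have im: "i \<in> {1..m}" using i pc by auto
    ultimately have "g = F2 m i c" using pc i by (simp add: F2_eq[OF im])
    then show ?thesis unfolding EO_gens_def using pc im by blast
  next
    case False
    then obtain i where i: "p = 2*i+1" by (auto elim: oddE)
    have "sg p = 2*i" using i pc by (simp add: sg_def)
    moreover have im: "i \<in> {1..m}" using i pc by auto
    ultimately have "g = F1 m i c" using pc i by (simp add: F1_eq[OF im])
    then show ?thesis unfolding EO_gens_def using pc im by blast
  qed
qed

lemma sg_range2: "p \<in> {2..2*m+1} \<Longrightarrow> sg p \<in> {2..2*m+1} \<and> sg p \<noteq> p \<and> sg p \<noteq> 1"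
  unfolding sg_def by (auto elim!: evenE oddE)

lemma linmap_Sm_sg: "p \<in> {2..2*m+1} \<Longrightarrow> linmap (2*m+1) (Sm (sg p) p c)"
  using sg_range2[of p m] by (intro linmap_Sm) auto

lemma Sm_sg_inv: "p \<in> {2..2*m+1} \<Longrightarrow> Sm (sg p) p c (Sm (sg p) p (-c) v) = v"
  using sg_range2[of p m] by (intro Sm_inv) auto

lemma mat_Sm_inv: "p \<in> {2..2*m+1} \<Longrightarrow>
   mmul (2*m+1) (mat_of (2*m+1) (Sm (sg p) p c)) (mat_of (2*m+1) (Sm (sg p) p (-c))) = idm (2*m+1)"
  by (rule mat_inv[OF linmap_Sm_sg linmap_Sm_sg Sm_sg_inv])

lemma mat_Sm_inv': "p \<in> {2..2*m+1} \<Longrightarrow>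
   mmul (2*m+1) (mat_of (2*m+1) (Sm (sg p) p (-c))) (mat_of (2*m+1) (Sm (sg p) p c)) = idm (2*m+1)"
  using mat_Sm_inv[of p m "-c"] by simp

lemma EO_gens_subgrp:
  assumes neg: "\<And>c. c \<in> J \<Longrightarrow> -c \<in> J"
  shows "subgrp (2*m+1) (gen_group (2*m+1) (EO_gens m J))"
proof (rule gen_group_subgrp)
  fix g assume "g \<in> EO_gens m J"
  then obtain p c where pc: "p \<in> {2..2*m+1}" "c \<in> J" "g = mat_of (2*m+1) (Sm (sg p) p c)"
    unfolding EO_gens_char by blast
  have "mat_of (2*m+1) (Sm (sg p) p (-c)) \<in> EO_gens m J"
    unfolding EO_gens_char using pc neg by blast
  then show "cleanm (2*m+1) g \<and> (\<exists>g'\<in>EO_gens m J. mmul (2*m+1) g g' = idm (2*m+1) \<and> mmul (2*m+1) g' g = idm (2*m+1))"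
    using pc mat_Sm_inv[OF pc(1)] mat_Sm_inv'[OF pc(1)] by auto
qed

lemma mat_comp4:
  assumes "linmap N T1" "linmap N T2" "linmap N T3" "linmap N T4"
  shows "mat_of N (\<lambda>v. T1 (T2 (T3 (T4 v)))) =
    mmul N (mat_of N T1) (mmul N (mat_of N T2) (mmul N (mat_of N T3) (mat_of N T4)))"
proof -
  have "mat_of N (\<lambda>v. T1 (T2 (T3 (T4 v)))) = mmul N (mat_of N T1) (mat_of N (\<lambda>v. T2 (T3 (T4 v))))"
    by (rule mat_comp[OF assms(1) linmap_comp[OF assms(2) linmap_comp[OF assms(3,4)]]])
  also have "mat_of N (\<lambda>v. T2 (T3 (T4 v))) = mmul N (mat_of N T2) (mat_of N (\<lambda>v. T3 (T4 v)))"
    by (rule mat_comp[OF assms(2) linmap_comp[OF assms(3,4)]])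
  also have "mat_of N (\<lambda>v. T3 (T4 v)) = mmul N (mat_of N T3) (mat_of N T4)"
    by (rule mat_comp[OF assms(3,4)])
  finally show ?thesis .
qed

lemma mat_comp5:
  assumes "linmap N T1" "linmap N T2" "linmap N T3" "linmap N T4" "linmap N T5"
  shows "mat_of N (\<lambda>v. T1 (T2 (T3 (T4 (T5 v))))) =
    mmul N (mat_of N T1) (mmul N (mat_of N T2) (mmul N (mat_of N T3) (mmul N (mat_of N T4) (mat_of N T5))))"
proof -
  have "mat_of N (\<lambda>v. T1 (T2 (T3 (T4 (T5 v))))) = mmul N (mat_of N T1) (mat_of N (\<lambda>v. T2 (T3 (T4 (T5 v)))))"
    by (rule mat_comp[OF assms(1) linmap_comp[OF assms(2) linmap_comp[OF assms(3) linmap_comp[OF assms(4,5)]]]])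
  also have "mat_of N (\<lambda>v. T2 (T3 (T4 (T5 v)))) = mmul N (mat_of N T2) (mmul N (mat_of N T3) (mmul N (mat_of N T4) (mat_of N T5)))"
    by (rule mat_comp4[OF assms(2-5)])
  finally show ?thesis .
qed

lemma linQ_negL: "linQ m (\<lambda>k. - a k) z = - linQ m a z"
  unfolding linQ_def by (simp add: sum_negf)

lemma gen_in: "g \<in> S \<Longrightarrow> cleanm N g \<Longrightarrow> g \<in> gen_group N S"
  using gen_group_gen[of g S N] by simp

lemma sg_top: "m \<ge> 1 \<Longrightarrow> sg (2*m+1) = 2*m" "m \<ge> 1 \<Longrightarrow> sg (2*m) = 2*m+1"
  unfolding sg_def by auto

context
  fixes m :: nat and I :: "'a::comm_ring_1 set"
  assumes two: "(2::'a) dvd 1" and m: "m \<ge> 1" and idl: "is_ideal I"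
begin

lemma h2: "2 * half = (1::'a)" by (rule half2[OF two])

lemma idl_mult: "c \<in> I \<Longrightarrow> r * c \<in> I"
  using idl unfolding is_ideal_def by blast
lemma idl_neg: "c \<in> I \<Longrightarrow> - c \<in> I"
  using idl_mult[of c "-1"] by simp

lemma DSER_gens_char:
  "g \<in> DSER_gens m J \<longleftrightarrow> (\<exists>a. (\<forall>z. isQ m z \<longrightarrow> linQ m a z \<in> J) \<and>
      (g = mat_of (2*m+1) (Ea m a) \<or> g = mat_of (2*m+1) (Eb m (a::nat \<Rightarrow> 'a))))"
  unfolding DSER_gens_def E_alpha_eq[OF two m] E_beta_eq[OF two m] by blast

lemma Ea_inv: "mmul (2*m+1) (mat_of (2*m+1) (Ea m (a::nat \<Rightarrow> 'a))) (mat_of (2*m+1) (Ea m (\<lambda>k. - a k))) = idm (2*m+1)"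
proof (rule mat_inv[OF linmap_Ea[OF m] linmap_Ea[OF m]])
  fix v :: "nat \<Rightarrow> 'a" assume v: "cleanv (2*m+1) v"
  show "Ea m a (Ea m (\<lambda>k. - a k) v) = v" unfolding Ea_comp[OF two m] using Ea_zero[OF m v] by simp
qed
lemma Eb_inv: "mmul (2*m+1) (mat_of (2*m+1) (Eb m (a::nat \<Rightarrow> 'a))) (mat_of (2*m+1) (Eb m (\<lambda>k. - a k))) = idm (2*m+1)"
proof (rule mat_inv[OF linmap_Eb[OF m] linmap_Eb[OF m]])
  fix v :: "nat \<Rightarrow> 'a" assume v: "cleanv (2*m+1) v"
  show "Eb m a (Eb m (\<lambda>k. - a k) v) = v" unfolding Eb_comp[OF two m] using Eb_zero[OF m v] by simp
qed
lemma Ea_inv': "mmul (2*m+1) (mat_of (2*m+1) (Ea m (\<lambda>k. - (a::nat \<Rightarrow> 'a) k))) (mat_of (2*m+1) (Ea m a)) = idm (2*m+1)"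
proof (rule mat_inv[OF linmap_Ea[OF m] linmap_Ea[OF m]])
  fix v :: "nat \<Rightarrow> 'a" assume v: "cleanv (2*m+1) v"
  show "Ea m (\<lambda>k. - a k) (Ea m a v) = v" unfolding Ea_comp[OF two m] using Ea_zero[OF m v] by simp
qed
lemma Eb_inv': "mmul (2*m+1) (mat_of (2*m+1) (Eb m (\<lambda>k. - (a::nat \<Rightarrow> 'a) k))) (mat_of (2*m+1) (Eb m a)) = idm (2*m+1)"
proof (rule mat_inv[OF linmap_Eb[OF m] linmap_Eb[OF m]])
  fix v :: "nat \<Rightarrow> 'a" assume v: "cleanv (2*m+1) v"
  show "Eb m (\<lambda>k. - a k) (Eb m a v) = v" unfolding Eb_comp[OF two m] using Eb_zero[OF m v] by simp
qed

lemma DSER_subgrp: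
  assumes neg: "\<And>c. c \<in> J \<Longrightarrow> -c \<in> J"
  shows "subgrp (2*m+1) (gen_group (2*m+1) (DSER_gens m (J::'a set)))"
proof (rule gen_group_subgrp)
  fix g assume "g \<in> DSER_gens m J"
  then obtain a where a: "\<forall>z. isQ m z \<longrightarrow> linQ m a z \<in> J"
    and g: "g = mat_of (2*m+1) (Ea m a) \<or> g = mat_of (2*m+1) (Eb m a)"
    unfolding DSER_gens_char by blast
  have na: "\<forall>z. isQ m z \<longrightarrow> linQ m (\<lambda>k. - a k) z \<in> J" using a neg by (simp add: linQ_negL)
  show "cleanm (2*m+1) g \<and> (\<exists>g'\<in>DSER_gens m J. mmul (2*m+1) g g' = idm (2*m+1) \<and> mmul (2*m+1) g' g = idm (2*m+1))"
  proof (cases "g = mat_of (2*m+1) (Ea m a)")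
    case True
    have "mat_of (2*m+1) (Ea m (\<lambda>k. - a k)) \<in> DSER_gens m J" unfolding DSER_gens_char using na by blast
    then show ?thesis using True Ea_inv Ea_inv' by auto
  next
    case False
    then have g: "g = mat_of (2*m+1) (Eb m a)" using g by blast
    have "mat_of (2*m+1) (Eb m (\<lambda>k. - a k)) \<in> DSER_gens m J" unfolding DSER_gens_char using na by blast
    then show ?thesis using g Eb_inv Eb_inv' by auto
  qed
qed

lemma Ea_in:
  assumes T: "subgrp (2*m+1) T"
    and e1: "\<And>c. c \<in> J \<Longrightarrow> mat_of (2*m+1) (Ea m (\<lambda>k. if k = 1 then c else 0)) \<in> T"
    and ep: "\<And>p c. p \<in> {2..2*m-1} \<Longrightarrow> c \<in> J \<Longrightarrow> mat_of (2*m+1) (Ea m (\<lambda>k. if k = p then c else 0)) \<in> T"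
    and a: "\<And>k. k \<in> {1..2*m-1} \<Longrightarrow> (a::nat \<Rightarrow> 'a) k \<in> J"
  shows "mat_of (2*m+1) (Ea m a) \<in> T"
proof -
  have main: "finite K \<Longrightarrow> K \<subseteq> {1..2*m-1} \<Longrightarrow> mat_of (2*m+1) (Ea m (\<lambda>k. if k \<in> K then a k else 0)) \<in> T" for K
  proof (induction K rule: finite_induct)
    case empty
    have "mat_of (2*m+1) (Ea m (\<lambda>k. 0::'a)) = mat_of (2*m+1) (\<lambda>v. v)"
      by (rule mat_of_cong) (rule Ea_zero[OF m])
    then have "mat_of (2*m+1) (Ea m (\<lambda>k. 0::'a)) = idm (2*m+1)" by (simp only: mat_of_id)
    moreover have "idm (2*m+1) \<in> T" using T by (simp only: subgrp_def)
    ultimately show ?case by simp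
  next
    case (insert j K)
    have f: "(\<lambda>k. if k \<in> insert j K then a k else 0) = (\<lambda>k. (if k \<in> K then a k else 0) + (if k = j then a j else 0))"
      using insert(2) by (intro ext) auto
    have c: "Ea m (\<lambda>k. if k \<in> insert j K then a k else 0) = (\<lambda>v. Ea m (\<lambda>k. if k \<in> K then a k else 0) (Ea m (\<lambda>k. if k = j then a j else 0) v))"
      unfolding f by (intro ext) (simp only: Ea_comp[OF two m])
    have s: "mat_of (2*m+1) (Ea m (\<lambda>k. if k = j then a j else 0)) \<in> T"
    proof (cases "j = 1")
      case True
      have "a 1 \<in> J" using a m by auto
      then show ?thesis using e1 True by simp
    next
      case False
      then have "j \<in> {2..2*m-1}" using insert(4) by auto
      moreover have "a j \<in> J" using a insert(4) by auto
      ultimately show ?thesis using ep by blast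
    qed
    have "mat_of (2*m+1) (Ea m (\<lambda>k. if k \<in> insert j K then a k else 0)) =
      mmul (2*m+1) (mat_of (2*m+1) (Ea m (\<lambda>k. if k \<in> K then a k else 0))) (mat_of (2*m+1) (Ea m (\<lambda>k. if k = j then a j else 0)))"
      unfolding c by (rule mat_comp[OF linmap_Ea[OF m] linmap_Ea[OF m]])
    then show ?case using insert s T by (simp add: subgrp_def)
  qed
  have "mat_of (2*m+1) (Ea m (\<lambda>k. if k \<in> {1..2*m-1} then a k else 0)) \<in> T"
    by (rule main[OF finite_atLeastAtMost subset_refl])
  then show ?thesis unfolding Ea_restrict[OF m] .
qed

lemma Eb_in:
  assumes T: "subgrp (2*m+1) T"
    and e1: "\<And>c. c \<in> J \<Longrightarrow> mat_of (2*m+1) (Eb m (\<lambda>k. if k = 1 then c else 0)) \<in> T"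
    and ep: "\<And>p c. p \<in> {2..2*m-1} \<Longrightarrow> c \<in> J \<Longrightarrow> mat_of (2*m+1) (Eb m (\<lambda>k. if k = p then c else 0)) \<in> T"
    and a: "\<And>k. k \<in> {1..2*m-1} \<Longrightarrow> (a::nat \<Rightarrow> 'a) k \<in> J"
  shows "mat_of (2*m+1) (Eb m a) \<in> T"
proof -
  have main: "finite K \<Longrightarrow> K \<subseteq> {1..2*m-1} \<Longrightarrow> mat_of (2*m+1) (Eb m (\<lambda>k. if k \<in> K then a k else 0)) \<in> T" for K
  proof (induction K rule: finite_induct)
    case empty
    have "mat_of (2*m+1) (Eb m (\<lambda>k. 0::'a)) = mat_of (2*m+1) (\<lambda>v. v)"
      by (rule mat_of_cong) (rule Eb_zero[OF m])
    then have "mat_of (2*m+1) (Eb m (\<lambda>k. 0::'a)) = idm (2*m+1)" by (simp only: mat_of_id)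
    moreover have "idm (2*m+1) \<in> T" using T by (simp only: subgrp_def)
    ultimately show ?case by simp
  next
    case (insert j K)
    have f: "(\<lambda>k. if k \<in> insert j K then a k else 0) = (\<lambda>k. (if k \<in> K then a k else 0) + (if k = j then a j else 0))"
      using insert(2) by (intro ext) auto
    have c: "Eb m (\<lambda>k. if k \<in> insert j K then a k else 0) = (\<lambda>v. Eb m (\<lambda>k. if k \<in> K then a k else 0) (Eb m (\<lambda>k. if k = j then a j else 0) v))"
      unfolding f by (intro ext) (simp only: Eb_comp[OF two m])
    have s: "mat_of (2*m+1) (Eb m (\<lambda>k. if k = j then a j else 0)) \<in> T"
    proof (cases "j = 1")
      case True
      have "a 1 \<in> J" using a m by auto
      then show ?thesis using e1 True by simp
    next
      case False
      then have "j \<in> {2..2*m-1}" using insert(4) by auto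
      moreover have "a j \<in> J" using a insert(4) by auto
      ultimately show ?thesis using ep by blast
    qed
    have "mat_of (2*m+1) (Eb m (\<lambda>k. if k \<in> insert j K then a k else 0)) =
      mmul (2*m+1) (mat_of (2*m+1) (Eb m (\<lambda>k. if k \<in> K then a k else 0))) (mat_of (2*m+1) (Eb m (\<lambda>k. if k = j then a j else 0)))"
      unfolding c by (rule mat_comp[OF linmap_Eb[OF m] linmap_Eb[OF m]])
    then show ?case using insert s T by (simp add: subgrp_def)
  qed
  have "mat_of (2*m+1) (Eb m (\<lambda>k. if k \<in> {1..2*m-1} then a k else 0)) \<in> T"
    by (rule main[OF finite_atLeastAtMost subset_refl])
  then show ?thesis unfolding Eb_restrict[OF m] .
qed


lemma dist5: "p \<in> {2..2*m-1} \<Longrightarrow> distinct [1, p, sg p, 2*m, 2*m+1] \<and> distinct [1, p, sg p, 2*m+1, 2*m]"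
  using sg_range[of p m] sg_ne[of p m] by auto

lemma p_range: "p \<in> {2..2*m-1} \<Longrightarrow> p \<in> {2..2*m+1}" by auto
lemma top_range: "2*m+1 \<in> {2..2*m+1}" "2*m \<in> {2..2*m+1}" using m by auto

lemma linmap_Sm_top: "linmap (2*m+1) (Sm (2*m) (2*m+1) c)" "linmap (2*m+1) (Sm (2*m+1) (2*m) c)"
  using m by (auto intro!: linmap_Sm)

lemma Ea1_eq: "mat_of (2*m+1) (Ea m (\<lambda>k. if k = 1 then (c::'a) else 0)) = mat_of (2*m+1) (Sm (2*m) (2*m+1) (-(half*c)))"
  by (rule mat_of_cong) (rule Ea_e1[OF two m])
lemma Eb1_eq: "mat_of (2*m+1) (Eb m (\<lambda>k. if k = 1 then (c::'a) else 0)) = mat_of (2*m+1) (Sm (2*m+1) (2*m) (-(half*c)))"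
  by (rule mat_of_cong) (rule Eb_e1[OF two m])

lemma half_back: "-(half * (-(2*(c::'a)))) = c"
proof -
  have "-(half * (-(2*c))) = (2*half) * c" by (simp add: algebra_simps)
  then show ?thesis using h2 by simp
qed

lemma Sm_top_a: "mat_of (2*m+1) (Sm (2*m) (2*m+1) (c::'a)) = mat_of (2*m+1) (Ea m (\<lambda>k. if k = 1 then -(2*c) else 0))"
  unfolding Ea1_eq half_back ..
lemma Sm_top_b: "mat_of (2*m+1) (Sm (2*m+1) (2*m) (c::'a)) = mat_of (2*m+1) (Eb m (\<lambda>k. if k = 1 then -(2*c) else 0))"
  unfolding Eb1_eq half_back ..

lemma Sm_top_gens: "c \<in> J \<Longrightarrow> mat_of (2*m+1) (Sm (2*m) (2*m+1) c) \<in> EO_gens m J"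
    "c \<in> J \<Longrightarrow> mat_of (2*m+1) (Sm (2*m+1) (2*m) c) \<in> EO_gens m J"
  unfolding EO_gens_char using top_range sg_top[OF m] by metis+

lemma Sm_gens: "p \<in> {2..2*m+1} \<Longrightarrow> c \<in> J \<Longrightarrow> mat_of (2*m+1) (Sm (sg p) p c) \<in> EO_gens m J"
  unfolding EO_gens_char by blast

lemma long_a:
  assumes p: "p \<in> {2..2*m-1}"
  shows "mat_of (2*m+1) (Ea m (\<lambda>k. if k = p then (c::'a) else 0)) =
    mmul (2*m+1) (mat_of (2*m+1) (Sm (sg p) p (half*c))) (mmul (2*m+1) (mat_of (2*m+1) (Sm (2*m) (2*m+1) 1))
      (mmul (2*m+1) (mat_of (2*m+1) (Sm (sg p) p (-(half*c)))) (mat_of (2*m+1) (Sm (2*m) (2*m+1) (-1)))))"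
proof -
  have 1: "mat_of (2*m+1) (Ea m (\<lambda>k. if k = p then c else 0)) = mat_of (2*m+1) (Lm p (sg p) (2*m) (2*m+1) c)"
    by (rule mat_of_cong) (rule Ea_ep[OF m p])
  have cc: "2 * (half * c) * 1 = c" using h2 by (simp add: mult.assoc[symmetric])
  have 2: "Lm p (sg p) (2*m) (2*m+1) c = (\<lambda>v. Sm (sg p) p (half*c) (Sm (2*m) (2*m+1) 1 (Sm (sg p) p (-(half*c)) (Sm (2*m) (2*m+1) (-1) v))))"
    using id1[of p "sg p" "2*m" "2*m+1" "half*c" 1] dist5[OF p] unfolding cc by (intro ext) simp
  show ?thesis unfolding 1 2
    by (rule mat_comp4[OF linmap_Sm_sg[OF p_range[OF p]] linmap_Sm_top(1) linmap_Sm_sg[OF p_range[OF p]] linmap_Sm_top(1)])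
qed

lemma long_b:
  assumes p: "p \<in> {2..2*m-1}"
  shows "mat_of (2*m+1) (Eb m (\<lambda>k. if k = p then (c::'a) else 0)) =
    mmul (2*m+1) (mat_of (2*m+1) (Sm (sg p) p (half*c))) (mmul (2*m+1) (mat_of (2*m+1) (Sm (2*m+1) (2*m) 1))
      (mmul (2*m+1) (mat_of (2*m+1) (Sm (sg p) p (-(half*c)))) (mat_of (2*m+1) (Sm (2*m+1) (2*m) (-1)))))"
proof -
  have 1: "mat_of (2*m+1) (Eb m (\<lambda>k. if k = p then c else 0)) = mat_of (2*m+1) (Lm p (sg p) (2*m+1) (2*m) c)"
    by (rule mat_of_cong) (rule Eb_ep[OF m p])
  have cc: "2 * (half * c) * 1 = c" using h2 by (simp add: mult.assoc[symmetric])
  have 2: "Lm p (sg p) (2*m+1) (2*m) c = (\<lambda>v. Sm (sg p) p (half*c) (Sm (2*m+1) (2*m) 1 (Sm (sg p) p (-(half*c)) (Sm (2*m+1) (2*m) (-1) v))))"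
    using id1[of p "sg p" "2*m+1" "2*m" "half*c" 1] dist5[OF p] unfolding cc by (intro ext) simp
  show ?thesis unfolding 1 2
    by (rule mat_comp4[OF linmap_Sm_sg[OF p_range[OF p]] linmap_Sm_top(2) linmap_Sm_sg[OF p_range[OF p]] linmap_Sm_top(2)])
qed

lemma short:
  assumes p: "p \<in> {2..2*m-1}"
  shows "mat_of (2*m+1) (Sm (sg p) p (c::'a)) =
    mmul (2*m+1) (mat_of (2*m+1) (Ea m (\<lambda>k. if k = p then -c else 0))) (mmul (2*m+1) (mat_of (2*m+1) (Sm (2*m+1) (2*m) 1))
      (mmul (2*m+1) (mat_of (2*m+1) (Ea m (\<lambda>k. if k = p then c else 0))) (mmul (2*m+1) (mat_of (2*m+1) (Sm (2*m+1) (2*m) (-1)))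
        (mat_of (2*m+1) (Eb m (\<lambda>k. if k = p then c else 0))))))"
proof -
  let ?q = "sg p"
  have d: "distinct [1, p, ?q, 2*m, 2*m+1]" "distinct [p, ?q, 2*m+1, 2*m]" using dist5[OF p] by auto
  have 2: "Sm ?q p c = (\<lambda>v. Lm p ?q (2*m) (2*m+1) (-c) (Sm (2*m+1) (2*m) 1 (Lm p ?q (2*m) (2*m+1) c
              (Sm (2*m+1) (2*m) (-1) (Lm p ?q (2*m+1) (2*m) c v)))))"
  proof (rule ext)
    fix v :: "nat \<Rightarrow> 'a"
    have i2: "Lm p ?q (2*m) (2*m+1) (-c) (Sm (2*m+1) (2*m) 1 (Lm p ?q (2*m) (2*m+1) (-(-c)) (Sm (2*m+1) (2*m) (-1) w)))
       = Sm ?q p (-((-c)*1)) (Lm p ?q (2*m+1) (2*m) ((-c)*1*1) w)" for w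
      by (rule id2[OF d(1)])
    have li: "Lm p ?q (2*m+1) (2*m) (-c) (Lm p ?q (2*m+1) (2*m) (-(-c)) v) = v"
      by (rule Lm_inv[OF d(2)])
    show "Sm ?q p c v = Lm p ?q (2*m) (2*m+1) (-c) (Sm (2*m+1) (2*m) 1 (Lm p ?q (2*m) (2*m+1) c
              (Sm (2*m+1) (2*m) (-1) (Lm p ?q (2*m+1) (2*m) c v))))"
      using i2[of "Lm p ?q (2*m+1) (2*m) c v"] li by simp
  qed
  have r: "p \<in> {1..2*m+1}" "?q \<in> {1..2*m+1}" "2*m \<in> {1..2*m+1}" "2*m+1 \<in> {1..2*m+1}"
    using p sg_range[OF p] m by auto
  have L: "linmap (2*m+1) (Lm p ?q (2*m) (2*m+1) x)" "linmap (2*m+1) (Lm p ?q (2*m+1) (2*m) x)" for x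
    using r by (auto intro!: linmap_Lm)
  have e1: "mat_of (2*m+1) (Lm p ?q (2*m) (2*m+1) x) = mat_of (2*m+1) (Ea m (\<lambda>k. if k = p then x else 0))" for x
    by (rule mat_of_cong) (rule Ea_ep[OF m p, symmetric])
  have e2: "mat_of (2*m+1) (Lm p ?q (2*m+1) (2*m) x) = mat_of (2*m+1) (Eb m (\<lambda>k. if k = p then x else 0))" for x
    by (rule mat_of_cong) (rule Eb_ep[OF m p, symmetric])
  show ?thesis unfolding 2 mat_comp5[OF L(1) linmap_Sm_top(2) L(1) linmap_Sm_top(2) L(2)] e1 e2 ..
qed

abbreviation "GO \<equiv> gen_group (2*m+1) (EO_gens m (UNIV::'a set))"
abbreviation "GQ \<equiv> gen_group (2*m+1) (DSER_gens m (UNIV::'a set))"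
abbreviation "HO \<equiv> gen_group (2*m+1) (EO_gens m I)"
abbreviation "HQ \<equiv> gen_group (2*m+1) (DSER_gens m I)"

lemma GO_sub: "subgrp (2*m+1) GO" by (rule EO_gens_subgrp) simp
lemma GQ_sub: "subgrp (2*m+1) GQ" by (rule DSER_subgrp) simp
lemma HO_sub: "subgrp (2*m+1) HO" by (rule EO_gens_subgrp) (rule idl_neg)
lemma HQ_sub: "subgrp (2*m+1) HQ" by (rule DSER_subgrp) (rule idl_neg)

lemma sub_mul: "subgrp N T \<Longrightarrow> A \<in> T \<Longrightarrow> B \<in> T \<Longrightarrow> mmul N A B \<in> T"
  unfolding subgrp_def by blast

lemma Sm_in_GO: "p \<in> {2..2*m+1} \<Longrightarrow> mat_of (2*m+1) (Sm (sg p) p c) \<in> GO"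
  by (rule gen_in[OF Sm_gens]) auto
lemma Sm_top_GO1: "mat_of (2*m+1) (Sm (2*m) (2*m+1) c) \<in> GO"
  by (rule gen_in[OF Sm_top_gens(1) cleanm_mat_of]) simp
lemma Sm_top_GO2: "mat_of (2*m+1) (Sm (2*m+1) (2*m) c) \<in> GO"
  by (rule gen_in[OF Sm_top_gens(2) cleanm_mat_of]) simp
lemmas Sm_top_GO = Sm_top_GO1 Sm_top_GO2

lemma DSER_in_GQ: "mat_of (2*m+1) (Ea m a) \<in> GQ" "mat_of (2*m+1) (Eb m a) \<in> GQ"
proof -
  have "mat_of (2*m+1) (Ea m a) \<in> DSER_gens m UNIV" "mat_of (2*m+1) (Eb m a) \<in> DSER_gens m UNIV"
    unfolding DSER_gens_char by blast+
  then show "mat_of (2*m+1) (Ea m a) \<in> GQ" "mat_of (2*m+1) (Eb m a) \<in> GQ" by (auto intro: gen_in)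
qed

lemma G1: "DSER_gens m UNIV \<subseteq> GO"
proof
  fix g assume "g \<in> DSER_gens m (UNIV::'a set)"
  then obtain a where g: "g = mat_of (2*m+1) (Ea m a) \<or> g = mat_of (2*m+1) (Eb m a)"
    unfolding DSER_gens_char by blast
  have "mat_of (2*m+1) (Ea m a) \<in> GO"
  proof (rule Ea_in[OF GO_sub, of UNIV])
    fix c :: 'a show "mat_of (2*m+1) (Ea m (\<lambda>k. if k = 1 then c else 0)) \<in> GO"
      unfolding Ea1_eq by (rule Sm_top_GO)
  next
    fix p and c :: 'a assume p: "p \<in> {2..2*m-1}"
    show "mat_of (2*m+1) (Ea m (\<lambda>k. if k = p then c else 0)) \<in> GO"
      unfolding long_a[OF p]
      by (intro sub_mul[OF GO_sub] Sm_in_GO[OF p_range[OF p]] Sm_top_GO)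
  qed simp
  moreover have "mat_of (2*m+1) (Eb m a) \<in> GO"
  proof (rule Eb_in[OF GO_sub, of UNIV])
    fix c :: 'a show "mat_of (2*m+1) (Eb m (\<lambda>k. if k = 1 then c else 0)) \<in> GO"
      unfolding Eb1_eq by (rule Sm_top_GO)
  next
    fix p and c :: 'a assume p: "p \<in> {2..2*m-1}"
    show "mat_of (2*m+1) (Eb m (\<lambda>k. if k = p then c else 0)) \<in> GO"
      unfolding long_b[OF p]
      by (intro sub_mul[OF GO_sub] Sm_in_GO[OF p_range[OF p]] Sm_top_GO)
  qed simp
  ultimately show "g \<in> GO" using g by blast
qed

lemma G2: "EO_gens m UNIV \<subseteq> GQ"
proof
  fix g assume "g \<in> EO_gens m (UNIV::'a set)"
  then obtain p c where p: "p \<in> {2..2*m+1}" and g: "g = mat_of (2*m+1) (Sm (sg p) p c)"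
    unfolding EO_gens_char by blast
  show "g \<in> GQ"
  proof (cases "p = 2*m+1")
    case True
    have "g = mat_of (2*m+1) (Sm (2*m) (2*m+1) c)" using g True sg_top[OF m] by simp
    then show ?thesis unfolding Sm_top_a by (simp only: DSER_in_GQ)
  next
    case False
    show ?thesis
    proof (cases "p = 2*m")
      case True
      have "g = mat_of (2*m+1) (Sm (2*m+1) (2*m) c)" using g True sg_top[OF m] by simp
      then show ?thesis unfolding Sm_top_b by (simp only: DSER_in_GQ)
    next
      case False2: False
      then have p': "p \<in> {2..2*m-1}" using p False by auto
      show ?thesis unfolding g short[OF p'] Sm_top_b
        by (intro sub_mul[OF GQ_sub] DSER_in_GQ)
    qed
  qed
qed

lemma GQ_eq_GO: "GQ = GO"
  using gen_group_least[OF GO_sub G1] gen_group_least[OF GQ_sub G2] by blast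

lemma in_NC_O: "h \<in> HO \<Longrightarrow> h \<in> normal_closure (2*m+1) GO HO"
  by (rule H_sub_NC[OF GO_sub]) (auto intro: gen_group_clean)
lemma in_NC_Q: "h \<in> HQ \<Longrightarrow> h \<in> normal_closure (2*m+1) GO HQ"
  by (rule H_sub_NC[OF GO_sub]) (auto intro: gen_group_clean)

lemma NCO_sub: "subgrp (2*m+1) (normal_closure (2*m+1) GO HO)"
  by (rule NC_subgrp[OF GO_sub HO_sub])
lemma NCQ_sub: "subgrp (2*m+1) (normal_closure (2*m+1) GO HQ)"
  by (rule NC_subgrp[OF GO_sub HQ_sub])

lemma conj_top:
  assumes G: "subgrp (2*m+1) GO" and A: "A \<in> normal_closure (2*m+1) GO H"
  shows "mmul (2*m+1) (mat_of (2*m+1) (Sm (2*m) (2*m+1) 1)) (mmul (2*m+1) A (mat_of (2*m+1) (Sm (2*m) (2*m+1) (-1)))) \<in> normal_closure (2*m+1) GO H"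
    and "mmul (2*m+1) (mat_of (2*m+1) (Sm (2*m+1) (2*m) 1)) (mmul (2*m+1) A (mat_of (2*m+1) (Sm (2*m+1) (2*m) (-1)))) \<in> normal_closure (2*m+1) GO H"
proof -
  have i1: "mmul (2*m+1) (mat_of (2*m+1) (Sm (2*m) (2*m+1) 1)) (mat_of (2*m+1) (Sm (2*m) (2*m+1) (-1))) = idm (2*m+1)"
       "mmul (2*m+1) (mat_of (2*m+1) (Sm (2*m) (2*m+1) (-1))) (mat_of (2*m+1) (Sm (2*m) (2*m+1) 1)) = idm (2*m+1)"
    using mat_Sm_inv[OF top_range(1), of 1] mat_Sm_inv'[OF top_range(1), of 1] sg_top[OF m] by simp_all
  have i2: "mmul (2*m+1) (mat_of (2*m+1) (Sm (2*m+1) (2*m) 1)) (mat_of (2*m+1) (Sm (2*m+1) (2*m) (-1))) = idm (2*m+1)"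
       "mmul (2*m+1) (mat_of (2*m+1) (Sm (2*m+1) (2*m) (-1))) (mat_of (2*m+1) (Sm (2*m+1) (2*m) 1)) = idm (2*m+1)"
    using mat_Sm_inv[OF top_range(2), of 1] mat_Sm_inv'[OF top_range(2), of 1] sg_top[OF m] by simp_all
  show "mmul (2*m+1) (mat_of (2*m+1) (Sm (2*m) (2*m+1) 1)) (mmul (2*m+1) A (mat_of (2*m+1) (Sm (2*m) (2*m+1) (-1)))) \<in> normal_closure (2*m+1) GO H"
    using NC_conj[OF G A Sm_top_GO(1) i1] by (simp add: mmul_assoc)
  show "mmul (2*m+1) (mat_of (2*m+1) (Sm (2*m+1) (2*m) 1)) (mmul (2*m+1) A (mat_of (2*m+1) (Sm (2*m+1) (2*m) (-1)))) \<in> normal_closure (2*m+1) GO H"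
    using NC_conj[OF G A Sm_top_GO(2) i2] by (simp add: mmul_assoc)
qed

lemma half_I: "c \<in> I \<Longrightarrow> half * c \<in> I" "c \<in> I \<Longrightarrow> -(half * c) \<in> I"
  using idl_mult idl_neg by blast+

lemma N2: "DSER_gens m I \<subseteq> normal_closure (2*m+1) GO HO"
proof
  fix g assume "g \<in> DSER_gens m I"
  then obtain a where a: "\<forall>z. isQ m z \<longrightarrow> linQ m a z \<in> I" and g: "g = mat_of (2*m+1) (Ea m a) \<or> g = mat_of (2*m+1) (Eb m a)"
    unfolding DSER_gens_char by blast
  have ak: "a k \<in> I" if "k \<in> {1..2*m-1}" for k
    using a isQ_unit[OF that] linQ_unit[OF that, of a] by metis
  have e1O: "mat_of (2*m+1) (Sm (2*m) (2*m+1) (-(half*c))) \<in> normal_closure (2*m+1) GO HO"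
     "mat_of (2*m+1) (Sm (2*m+1) (2*m) (-(half*c))) \<in> normal_closure (2*m+1) GO HO" if c: "c \<in> I" for c
    by (rule in_NC_O[OF gen_in[OF Sm_top_gens(1)[OF half_I(2)[OF c]] cleanm_mat_of]],
        rule in_NC_O[OF gen_in[OF Sm_top_gens(2)[OF half_I(2)[OF c]] cleanm_mat_of]])
  have Sp: "mat_of (2*m+1) (Sm (sg p) p x) \<in> normal_closure (2*m+1) GO HO" if "p \<in> {2..2*m-1}" "x \<in> I" for p x
    by (rule in_NC_O[OF gen_in[OF Sm_gens[OF p_range[OF that(1)] that(2)] cleanm_mat_of]])
  have "mat_of (2*m+1) (Ea m a) \<in> normal_closure (2*m+1) GO HO"
  proof (rule Ea_in[OF NCO_sub, of I])
    fix c :: 'a assume "c \<in> I" then show "mat_of (2*m+1) (Ea m (\<lambda>k. if k = 1 then c else 0)) \<in> normal_closure (2*m+1) GO HO"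
      unfolding Ea1_eq by (rule e1O(1))
  next
    fix p and c :: 'a assume p: "p \<in> {2..2*m-1}" and c: "c \<in> I"
    show "mat_of (2*m+1) (Ea m (\<lambda>k. if k = p then c else 0)) \<in> normal_closure (2*m+1) GO HO"
      unfolding long_a[OF p]
      by (rule sub_mul[OF NCO_sub Sp[OF p half_I(1)[OF c]] conj_top(1)[OF GO_sub Sp[OF p half_I(2)[OF c]]]])
  qed (rule ak)
  moreover have "mat_of (2*m+1) (Eb m a) \<in> normal_closure (2*m+1) GO HO"
  proof (rule Eb_in[OF NCO_sub, of I])
    fix c :: 'a assume "c \<in> I" then show "mat_of (2*m+1) (Eb m (\<lambda>k. if k = 1 then c else 0)) \<in> normal_closure (2*m+1) GO HO"
      unfolding Eb1_eq by (rule e1O(2))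
  next
    fix p and c :: 'a assume p: "p \<in> {2..2*m-1}" and c: "c \<in> I"
    show "mat_of (2*m+1) (Eb m (\<lambda>k. if k = p then c else 0)) \<in> normal_closure (2*m+1) GO HO"
      unfolding long_b[OF p]
      by (rule sub_mul[OF NCO_sub Sp[OF p half_I(1)[OF c]] conj_top(2)[OF GO_sub Sp[OF p half_I(2)[OF c]]]])
  qed (rule ak)
  ultimately show "g \<in> normal_closure (2*m+1) GO HO" using g by blast
qed

lemma DSER_I_single:
  assumes c: "c \<in> I" and j: "j \<in> {1..2*m-1}"
  shows "mat_of (2*m+1) (Ea m (\<lambda>k. if k = j then c else 0)) \<in> normal_closure (2*m+1) GO HQ"
    and "mat_of (2*m+1) (Eb m (\<lambda>k. if k = j then c else 0)) \<in> normal_closure (2*m+1) GO HQ"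
proof -
  have "\<forall>z. isQ m z \<longrightarrow> linQ m (\<lambda>k. if k = j then c else 0) z \<in> I"
    unfolding linQ_delta[OF j] using c idl_mult by (simp add: mult.commute)
  then have "mat_of (2*m+1) (Ea m (\<lambda>k. if k = j then c else 0)) \<in> DSER_gens m I"
     "mat_of (2*m+1) (Eb m (\<lambda>k. if k = j then c else 0)) \<in> DSER_gens m I"
    unfolding DSER_gens_char by blast+
  note ds = this
  show "mat_of (2*m+1) (Ea m (\<lambda>k. if k = j then c else 0)) \<in> normal_closure (2*m+1) GO HQ"
    by (rule in_NC_Q[OF gen_in[OF ds(1) cleanm_mat_of]])
  show "mat_of (2*m+1) (Eb m (\<lambda>k. if k = j then c else 0)) \<in> normal_closure (2*m+1) GO HQ"
    by (rule in_NC_Q[OF gen_in[OF ds(2) cleanm_mat_of]])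
qed

lemma N1: "EO_gens m I \<subseteq> normal_closure (2*m+1) GO HQ"
proof
  fix g assume "g \<in> EO_gens m I"
  then obtain p c where p: "p \<in> {2..2*m+1}" and c: "c \<in> I" and g: "g = mat_of (2*m+1) (Sm (sg p) p c)"
    unfolding EO_gens_char by blast
  have r1: "(1::nat) \<in> {1..2*m-1}" using m by auto
  have c2: "-(2*c) \<in> I" using c idl_mult idl_neg by blast
  show "g \<in> normal_closure (2*m+1) GO HQ"
  proof (cases "p = 2*m+1")
    case True
    have "g = mat_of (2*m+1) (Sm (2*m) (2*m+1) c)" using g True sg_top[OF m] by simp
    then show ?thesis unfolding Sm_top_a by (simp only: DSER_I_single(1)[OF c2 r1])
  next
    case False
    show ?thesis
    proof (cases "p = 2*m")
      case True
      have "g = mat_of (2*m+1) (Sm (2*m+1) (2*m) c)" using g True sg_top[OF m] by simp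
      then show ?thesis unfolding Sm_top_b by (simp only: DSER_I_single(2)[OF c2 r1])
    next
      case False2: False
      then have p': "p \<in> {2..2*m-1}" using p False by auto
      have p1: "p \<in> {1..2*m-1}" using p' by auto
      have X: "mat_of (2*m+1) (Ea m (\<lambda>k. if k = p then -c else 0)) \<in> normal_closure (2*m+1) GO HQ"
        by (rule DSER_I_single(1)[OF idl_neg[OF c] p1])
      have Y: "mat_of (2*m+1) (Eb m (\<lambda>k. if k = p then c else 0)) \<in> normal_closure (2*m+1) GO HQ"
        by (rule DSER_I_single(2)[OF c p1])
      have M: "mmul (2*m+1) (mat_of (2*m+1) (Sm (2*m+1) (2*m) 1)) (mmul (2*m+1) (mat_of (2*m+1) (Ea m (\<lambda>k. if k = p then c else 0))) (mat_of (2*m+1) (Sm (2*m+1) (2*m) (-1))))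
          \<in> normal_closure (2*m+1) GO HQ"
        by (rule conj_top(2)[OF GO_sub DSER_I_single(1)[OF c p1]])
      have "mat_of (2*m+1) (Sm (sg p) p c) = mmul (2*m+1) (mat_of (2*m+1) (Ea m (\<lambda>k. if k = p then -c else 0)))
          (mmul (2*m+1) (mmul (2*m+1) (mat_of (2*m+1) (Sm (2*m+1) (2*m) 1)) (mmul (2*m+1) (mat_of (2*m+1) (Ea m (\<lambda>k. if k = p then c else 0))) (mat_of (2*m+1) (Sm (2*m+1) (2*m) (-1)))))
            (mat_of (2*m+1) (Eb m (\<lambda>k. if k = p then c else 0))))"
        unfolding short[OF p'] by (simp add: mmul_assoc)
      then show ?thesis unfolding g using sub_mul[OF NCQ_sub X sub_mul[OF NCQ_sub M Y]] by simp
    qed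
  qed
qed

lemma main_eq: "EO_QH_rel m I = EO_odd_rel m I"
proof -
  have L: "EO_QH_rel m I = normal_closure (2*m+1) GO HQ"
    unfolding EO_QH_rel_def EO_QH_def EO_QH_ideal_def GQ_eq_GO ..
  have R: "EO_odd_rel m I = normal_closure (2*m+1) GO HO"
    unfolding EO_odd_rel_def EO_odd_def EO_odd_ideal_def ..
  show ?thesis unfolding L R
    using NC_mono[OF GO_sub HO_sub N2] NC_mono[OF GO_sub HQ_sub N1] by blast
qed

end

theorem mainTheorem6:
  fixes I :: "'a::comm_ring_1 set" and m :: nat
  assumes "(2::'a) dvd 1"
    and "is_ideal I"
    and "m \<ge> 1"
  shows "EO_QH_rel m I = EO_odd_rel m I"
  by (rule main_eq[OF assms(1) assms(3) assms(2)])

end
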